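(* For integers $n,k$ with $n\geq k+1\geq 2$, the average $k$-alternating length of permutations in $\mathfrak{S}_n$ is $$E_n(as_k)=\frac{1}{n!}\sum_{w\in\mathfrak{S}_n} as_k(w)=\frac{4(n-k)+5}{6}.$$
   Context: $\mathfrak{S}_n$ is the set of permutations $w=w_1w_2\cdots w_n$ of $\{1,\dots,n\}$ (in one-line notation). A subsequence $w_{i_1}w_{i_2}\cdots w_{i_s}$ ($i_1<\dots<i_s$) of $w$ is alternating if $w_{i_1}>w_{i_2}<w_{i_3}>\cdots$ (inequalities alternate, starting with $>$). It is $k$-alternating if moreover $|w_{i_j}-w_{i_{j+1}}|\geq k$ for every $j$. The $k$-alternating length $as_k(w)$ is the maximal length (number of elements) of a $k$-alternating subsequence of $w$. *)

theory Defs
  imports Main "HOL-Combinatorics.Multiset_Permutations" "HOL-Library.Sublist"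
begin

text \<open>Indices here are 0-based, so position j even corresponds to a ">" step.\<close>
definition k_alternating :: "nat \<Rightarrow> nat list \<Rightarrow> bool" where
  "k_alternating k xs \<longleftrightarrow>
     (\<forall>j. Suc j < length xs \<longrightarrow>
        (if even j then xs ! j > xs ! Suc j else xs ! j < xs ! Suc j) \<and>
        int k \<le> \<bar>int (xs ! j) - int (xs ! Suc j)\<bar>)"

definition as_k :: "nat \<Rightarrow> nat list \<Rightarrow> nat" where
  "as_k k w = Max {length xs | xs. subseq xs w \<and> k_alternating k xs}"

end

theory Submission
  imports Defs
begin

lemma card_perms_split:
  assumes "finite A" "A \<noteq> {}"
  shows "card {w\<in>permutations_of_set A. P w} = (\<Sum>x\<in>A. card {w\<in>permutations_of_set (A - {x}). P (x # w)})"
proof -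
  have "{w\<in>permutations_of_set A. P w} = (\<Union>x\<in>A. (\<lambda>w. x # w) ` {w\<in>permutations_of_set (A - {x}). P (x # w)})"
    using permutations_of_set_nonempty[OF assms(2)] by auto
  also have "card \<dots> = (\<Sum>x\<in>A. card ((\<lambda>w. x # w) ` {w\<in>permutations_of_set (A - {x}). P (x # w)}))"
    by (rule card_UN_disjoint) (use assms in auto)
  also have "\<dots> = (\<Sum>x\<in>A. card {w\<in>permutations_of_set (A - {x}). P (x # w)})"
    by (intro sum.cong refl card_image) (auto simp: inj_on_def)
  finally show ?thesis .
qed

lemma filter_count:
  assumes "finite A" "C \<subseteq> A"
  shows "card {w\<in>permutations_of_set A. Q (filter (\<lambda>x. x \<in> C) w)} * fact (card C)
         = fact (card A) * card {u\<in>permutations_of_set C. Q u}"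
  using assms
proof (induction "card A" arbitrary: A C Q)
  case 0
  then have "A = {}" "C = {}" by auto
  moreover have "{u. u = [] \<and> Q u} = {w. w = [] \<and> Q []}" by auto
  ultimately show ?case by simp
next
  case (Suc n)
  then have fA: "finite A" and ne: "A \<noteq> {}" by auto
  have fC: "finite C" using Suc.prems finite_subset by blast
  have cA: "card (A - {x}) = n" if "x \<in> A" for x using Suc.hyps that fA by simp
  have s1: "card {w\<in>permutations_of_set A. Q (filter (\<lambda>x. x \<in> C) w)}
      = (\<Sum>x\<in>A. card {w\<in>permutations_of_set (A - {x}). Q (filter (\<lambda>y. y \<in> C) (x # w))})"
    by (rule card_perms_split[OF fA ne])
  define T where "T x = card {u\<in>permutations_of_set (C - {x}). Q (x # u)}" for x
  have tC: "card {u\<in>permutations_of_set C. Q u} = (\<Sum>x\<in>C. T x)" if "C \<noteq> {}"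
    unfolding T_def by (rule card_perms_split[OF fC that])
  have nc: "card {w\<in>permutations_of_set (A - {x}). Q (filter (\<lambda>y. y \<in> C) (x # w))} * fact (card C)
      = fact n * card {u\<in>permutations_of_set C. Q u}" if "x \<in> A - C" for x
  proof -
    have "card {w\<in>permutations_of_set (A - {x}). Q (filter (\<lambda>y. y \<in> C) (x # w))} * fact (card C)
       = card {w\<in>permutations_of_set (A - {x}). Q (filter (\<lambda>y. y \<in> C) w)} * fact (card C)"
      using that by simp
    also have "\<dots> = fact (card (A - {x})) * card {u\<in>permutations_of_set C. Q u}"
      by (rule Suc.hyps(1)) (use that Suc.prems cA in auto)
    finally show ?thesis using cA[of x] that by simp
  qed
  have yc: "card {w\<in>permutations_of_set (A - {x}). Q (filter (\<lambda>y. y \<in> C) (x # w))} * fact (card C - 1)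
      = fact n * T x" if "x \<in> C" for x
  proof -
    have "{w\<in>permutations_of_set (A - {x}). Q (filter (\<lambda>y. y \<in> C) (x # w))}
        = {w\<in>permutations_of_set (A - {x}). (\<lambda>u. Q (x # u)) (filter (\<lambda>y. y \<in> C - {x}) w)}"
    proof (intro Collect_cong conj_cong refl)
      fix w assume "w \<in> permutations_of_set (A - {x})"
      then have "x \<notin> set w" by (auto dest: permutations_of_setD)
      then have "filter (\<lambda>y. y \<in> C) w = filter (\<lambda>y. y \<in> C - {x}) w"
        by (intro filter_cong) auto
      then show "Q (filter (\<lambda>y. y \<in> C) (x # w)) = (\<lambda>u. Q (x # u)) (filter (\<lambda>y. y \<in> C - {x}) w)"
        using that by simp
    qed
    then have "card {w\<in>permutations_of_set (A - {x}). Q (filter (\<lambda>y. y \<in> C) (x # w))} * fact (card (C - {x}))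
       = fact (card (A - {x})) * card {u\<in>permutations_of_set (C - {x}). (\<lambda>u. Q (x # u)) u}"
    proof -
      have xA: "x \<in> A" using that Suc.prems by auto
      have "card {w\<in>permutations_of_set (A - {x}). (\<lambda>u. Q (x # u)) (filter (\<lambda>y. y \<in> C - {x}) w)} * fact (card (C - {x}))
       = fact (card (A - {x})) * card {u\<in>permutations_of_set (C - {x}). (\<lambda>u. Q (x # u)) u}"
        by (rule Suc.hyps(1)) (use cA[OF xA] Suc.prems fA in auto)
      then show ?thesis using \<open>{w\<in>permutations_of_set (A - {x}). Q (filter (\<lambda>y. y \<in> C) (x # w))}
        = {w\<in>permutations_of_set (A - {x}). (\<lambda>u. Q (x # u)) (filter (\<lambda>y. y \<in> C - {x}) w)}\<close> by simp
    qed
    then show ?thesis using cA that Suc.prems fC unfolding T_def by auto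
  qed
  show ?case
  proof (cases "C = {}")
    case True
    then show ?thesis using s1 nc Suc.hyps(2)[symmetric] fA
      by (simp add: sum_distrib_right add_mult_distrib mult.assoc)
  next
    case False
    then have c1: "card C \<ge> 1" using fC by (simp add: Suc_leI card_gt_0_iff)
    have fc: "fact (card C) = card C * fact (card C - 1)"
      using c1 fact_reduce[of "card C", where 'a = nat] by simp
    have "card {w\<in>permutations_of_set A. Q (filter (\<lambda>x. x \<in> C) w)} * fact (card C)
      = (\<Sum>x\<in>A. card {w\<in>permutations_of_set (A - {x}). Q (filter (\<lambda>y. y \<in> C) (x # w))} * fact (card C))"
      by (simp add: s1 sum_distrib_right)
    also have "\<dots> = (\<Sum>x\<in>A - C. card {w\<in>permutations_of_set (A - {x}). Q (filter (\<lambda>y. y \<in> C) (x # w))} * fact (card C))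
        + (\<Sum>x\<in>C. card {w\<in>permutations_of_set (A - {x}). Q (filter (\<lambda>y. y \<in> C) (x # w))} * fact (card C))"
      by (rule sum.subset_diff[OF Suc.prems(2) fA])
    also have "\<dots> = (\<Sum>x\<in>A - C. fact n * card {u\<in>permutations_of_set C. Q u})
        + (\<Sum>x\<in>C. card C * (fact n * T x))"
      by (intro arg_cong2[where f="(+)"] sum.cong refl)
         (use nc yc fc in \<open>auto simp: mult.assoc mult.left_commute[of "card C"]\<close>)
    also have "\<dots> = card (A - C) * fact n * card {u\<in>permutations_of_set C. Q u}
        + card C * fact n * card {u\<in>permutations_of_set C. Q u}"
      using tC[OF False] by (simp add: sum_distrib_left mult.assoc)
    also have "\<dots> = (card (A - C) + card C) * fact n * card {u\<in>permutations_of_set C. Q u}"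
      by (simp add: algebra_simps)
    also have "card (A - C) + card C = Suc n"
      using Suc.hyps(2) Suc.prems(2) fA by (simp add: card_Diff_subset fC card_mono)
    also have "Suc n * fact n = (fact (Suc n) :: nat)" by simp
    finally show ?thesis using Suc.hyps(2) by simp
  qed
qed

fun nbok :: "bool \<Rightarrow> ('a \<Rightarrow> bool) \<Rightarrow> 'a \<Rightarrow> 'a option \<Rightarrow> 'a list \<Rightarrow> bool" where
  "nbok e P v p [] = True"
| "nbok e P v p (x # xs) = (if x = v then (case p of None \<Rightarrow> e | Some q \<Rightarrow> \<not> P q) \<and> (xs = [] \<or> \<not> P (hd xs))
      else nbok e P v (Some x) xs)"

lemma nbok_append:
  "v \<notin> set xs \<Longrightarrow> nbok e P v p (xs @ v # ys) =
    ((case (if xs = [] then p else Some (last xs)) of None \<Rightarrow> e | Some q \<Rightarrow> \<not> P q) \<and> (ys = [] \<or> \<not> P (hd ys)))"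
  by (induction xs arbitrary: p) auto

lemma H_count:
  assumes "finite D" "D \<noteq> {}"
  shows "card {u\<in>permutations_of_set D. u = [] \<or> \<not> P (hd u)} = card {x\<in>D. \<not> P x} * fact (card D - 1)"
proof -
  have "card {u\<in>permutations_of_set D. u = [] \<or> \<not> P (hd u)}
     = (\<Sum>x\<in>D. card {w\<in>permutations_of_set (D - {x}). x # w = [] \<or> \<not> P (hd (x # w))})"
    by (rule card_perms_split[OF assms])
  also have "\<dots> = (\<Sum>x\<in>D. if \<not> P x then fact (card D - 1) else 0)"
    by (intro sum.cong refl) (use assms in auto)
  also have "\<dots> = card {x\<in>D. \<not> P x} * fact (card D - 1)"
    using assms by (simp add: sum.If_cases Int_def)
  finally show ?thesis .
qed

lemma H_count0: "card {u\<in>permutations_of_set {}. u = [] \<or> \<not> P (hd u)} = 1"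
proof -
  have "{u\<in>permutations_of_set {}. u = [] \<or> \<not> P (hd u)} = {[]}" by auto
  then show ?thesis by simp
qed

lemma nbok_Cons_other: "y \<noteq> v \<Longrightarrow> nbok e P v p (y # u) = nbok e P v None (y # u)"
  by simp

lemma arith_T:
  fixes b g m f :: nat
  assumes "b + g = m" "m \<ge> 2"
  shows "b * g^2 * f + g * ((g - 1) + (g - 1)^2) * f = g^2 * ((m - 1) * f)"
proof (cases g)
  case 0 then show ?thesis by simp
next
  case (Suc h)
  then have "m - 1 = b + h" using assms by simp
  then show ?thesis using Suc by (simp add: power2_eq_square algebra_simps)
qed

lemma Tp_step:
  assumes "finite E" "v \<notin> E"
  shows "card {u\<in>permutations_of_set (insert v E). nbok e P v (Some x) u}
       = (if \<not> P x then card {u\<in>permutations_of_set E. u = [] \<or> \<not> P (hd u)} else 0)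
         + card {u\<in>permutations_of_set (insert v E). hd u \<noteq> v \<and> nbok e P v None u}"
proof -
  have fi: "finite (insert v E)" using assms by simp
  have a: "card {u\<in>permutations_of_set (insert v E). nbok e P v (Some x) u}
     = (\<Sum>y\<in>insert v E. card {w\<in>permutations_of_set (insert v E - {y}). nbok e P v (Some x) (y # w)})"
    by (rule card_perms_split[OF fi]) simp
  also have "\<dots> = card {w\<in>permutations_of_set E. nbok e P v (Some x) (v # w)}
      + (\<Sum>y\<in>E. card {w\<in>permutations_of_set (insert v E - {y}). nbok e P v (Some x) (y # w)})"
    using assms by (simp add: sum.insert)
  also have "card {w\<in>permutations_of_set E. nbok e P v (Some x) (v # w)}
      = (if \<not> P x then card {u\<in>permutations_of_set E. u = [] \<or> \<not> P (hd u)} else 0)"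
    by simp
  also have "(\<Sum>y\<in>E. card {w\<in>permutations_of_set (insert v E - {y}). nbok e P v (Some x) (y # w)})
      = (\<Sum>y\<in>E. card {w\<in>permutations_of_set (insert v E - {y}). hd (y # w) \<noteq> v \<and> nbok e P v None (y # w)})"
    by (intro sum.cong refl arg_cong[where f=card] Collect_cong) (use assms in auto)
  also have "\<dots> = (\<Sum>y\<in>insert v E. card {w\<in>permutations_of_set (insert v E - {y}). hd (y # w) \<noteq> v \<and> nbok e P v None (y # w)})"
    using assms by (simp add: sum.insert)
  also have "\<dots> = card {u\<in>permutations_of_set (insert v E). hd u \<noteq> v \<and> nbok e P v None u}"
    by (rule card_perms_split[OF fi, symmetric]) simp
  finally show ?thesis .
qed

lemma Tp_rec:
  assumes "finite D" "v \<notin> D"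
  shows "card {u\<in>permutations_of_set (insert v D). hd u \<noteq> v \<and> nbok e P v None u}
       = (\<Sum>x\<in>D. (if \<not> P x then card {u\<in>permutations_of_set (D - {x}). u = [] \<or> \<not> P (hd u)} else 0)
         + card {u\<in>permutations_of_set (insert v (D - {x})). hd u \<noteq> v \<and> nbok e P v None u})"
proof -
  have fi: "finite (insert v D)" using assms by simp
  have "card {u\<in>permutations_of_set (insert v D). hd u \<noteq> v \<and> nbok e P v None u}
     = (\<Sum>y\<in>insert v D. card {w\<in>permutations_of_set (insert v D - {y}). hd (y # w) \<noteq> v \<and> nbok e P v None (y # w)})"
    by (rule card_perms_split[OF fi]) simp
  also have "\<dots> = (\<Sum>y\<in>D. card {w\<in>permutations_of_set (insert v D - {y}). hd (y # w) \<noteq> v \<and> nbok e P v None (y # w)})"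
    using assms by (simp add: sum.insert)
  also have "\<dots> = (\<Sum>y\<in>D. card {w\<in>permutations_of_set (insert v (D - {y})). nbok e P v (Some y) w})"
  proof (intro sum.cong refl)
    fix y assume "y \<in> D"
    then have "y \<noteq> v" "insert v D - {y} = insert v (D - {y})" using assms by auto
    then show "card {w\<in>permutations_of_set (insert v D - {y}). hd (y # w) \<noteq> v \<and> nbok e P v None (y # w)}
      = card {w\<in>permutations_of_set (insert v (D - {y})). nbok e P v (Some y) w}" by simp
  qed
  also have "\<dots> = (\<Sum>x\<in>D. (if \<not> P x then card {u\<in>permutations_of_set (D - {x}). u = [] \<or> \<not> P (hd u)} else 0)
         + card {u\<in>permutations_of_set (insert v (D - {x})). hd u \<noteq> v \<and> nbok e P v None u})"
    by (intro sum.cong refl Tp_step) (use assms in auto)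
  finally show ?thesis .
qed

lemma Tp_count:
  assumes "finite D" "v \<notin> D"
  shows "card {u\<in>permutations_of_set (insert v D). hd u \<noteq> v \<and> nbok e P v None u}
       = card {x\<in>D. \<not> P x}^2 * fact (card D - 1)"
  using assms
proof (induction "card D" arbitrary: D rule: less_induct)
  case less
  show ?case
  proof (cases "card D")
    case 0
    then have "D = {}" using less.prems by auto
    moreover have "{u\<in>permutations_of_set {v}. hd u \<noteq> v \<and> nbok e P v None u} = {}" by auto
    ultimately show ?thesis by simp
  next
    case (Suc m1)
    define g where "g = card {x\<in>D. \<not> P x}"
    have rec: "card {u\<in>permutations_of_set (insert v D). hd u \<noteq> v \<and> nbok e P v None u}
       = (\<Sum>x\<in>D. (if \<not> P x then card {u\<in>permutations_of_set (D - {x}). u = [] \<or> \<not> P (hd u)} else 0)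
         + card {u\<in>permutations_of_set (insert v (D - {x})). hd u \<noteq> v \<and> nbok e P v None u})"
      by (rule Tp_rec) (use less.prems in auto)
    have IH: "card {u\<in>permutations_of_set (insert v (D - {x})). hd u \<noteq> v \<and> nbok e P v None u}
        = card {y\<in>D - {x}. \<not> P y}^2 * fact (card D - 2)" if "x \<in> D" for x
    proof -
      have "card (D - {x}) < card D" using that less.prems by (simp add: card_gt_0_iff Suc)
      from less.hyps[OF this] that less.prems have
        "card {u\<in>permutations_of_set (insert v (D - {x})). hd u \<noteq> v \<and> nbok e P v None u}
          = card {y\<in>D - {x}. \<not> P y}^2 * fact (card (D - {x}) - 1)" by auto
      moreover have "card (D - {x}) - 1 = card D - 2" using that less.prems by simp
      ultimately show ?thesis by (simp only:)
    qed
    have cg: "card {y\<in>D - {x}. \<not> P y} = (if \<not> P x then g - 1 else g)" if "x \<in> D" for x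
    proof -
      have "{y\<in>D - {x}. \<not> P y} = {y\<in>D. \<not> P y} - {x}" by auto
      moreover have "finite {y\<in>D. \<not> P y}" using less.prems by simp
      ultimately show ?thesis unfolding g_def using that by (cases "P x") (simp_all add: card_Diff_singleton)
    qed
    show ?thesis
    proof (cases "m1 = 0")
      case True
      then obtain x where D: "D = {x}" using Suc card_1_singletonE by auto
      have "card {u\<in>permutations_of_set (insert v D). hd u \<noteq> v \<and> nbok e P v None u}
        = (if \<not> P x then card {u\<in>permutations_of_set ({}::'a set). u = [] \<or> \<not> P (hd u)} else 0)
          + card {u\<in>permutations_of_set (insert v ({}::'a set)). hd u \<noteq> v \<and> nbok e P v None u}"
        using rec D by simp
      also have "card {u\<in>permutations_of_set (insert v ({}::'a set)). hd u \<noteq> v \<and> nbok e P v None u} = 0"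
        using IH[of x] D by simp
      also have "card {u\<in>permutations_of_set ({}::'a set). u = [] \<or> \<not> P (hd u)} = 1"
        by (rule H_count0)
      finally have eq: "card {u\<in>permutations_of_set (insert v D). hd u \<noteq> v \<and> nbok e P v None u} = (if \<not> P x then 1 else 0)" by simp
      moreover have "{y\<in>D. \<not> P y} = (if P x then {} else {x})" using D by auto
      ultimately show ?thesis using D by simp
    next
      case False
      then have m2: "card D \<ge> 2" using Suc by simp
      have H: "card {u\<in>permutations_of_set (D - {x}). u = [] \<or> \<not> P (hd u)} = card {y\<in>D - {x}. \<not> P y} * fact (card D - 2)"
        if "x \<in> D" for x
      proof -
        have "card (D - {x}) \<ge> 1" using m2 that less.prems by simp
        have "D - {x} \<noteq> {}"
        proof
          assume h: "D - {x} = {}"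
          have "card (D - {x}) = 0" by (simp only: h card.empty)
          then show False using \<open>card (D - {x}) \<ge> 1\<close> by linarith
        qed
        have "finite (D - {x})" using less.prems by simp
        from H_count[OF this \<open>D - {x} \<noteq> {}\<close>, of P]
        have "card {u\<in>permutations_of_set (D - {x}). u = [] \<or> \<not> P (hd u)} = card {y\<in>D - {x}. \<not> P y} * fact (card (D - {x}) - 1)" .
        moreover have "card (D - {x}) - 1 = card D - 2" using that less.prems by simp
        ultimately show ?thesis by (simp only:)
      qed
      have "card {u\<in>permutations_of_set (insert v D). hd u \<noteq> v \<and> nbok e P v None u}
        = (\<Sum>x\<in>D. if \<not> P x then ((g - 1) + (g - 1)^2) * fact (card D - 2) else g^2 * fact (card D - 2))"
        unfolding rec
      proof (intro sum.cong refl)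
        fix x assume x: "x \<in> D"
        show "(if \<not> P x then card {u\<in>permutations_of_set (D - {x}). u = [] \<or> \<not> P (hd u)} else 0)
         + card {u\<in>permutations_of_set (insert v (D - {x})). hd u \<noteq> v \<and> nbok e P v None u}
         = (if \<not> P x then ((g - 1) + (g - 1)^2) * fact (card D - 2) else g^2 * fact (card D - 2))"
          using H[OF x] IH[OF x] cg[OF x] by (simp add: add_mult_distrib)
      qed
      also have "\<dots> = card {x\<in>D. \<not> P x} * (((g - 1) + (g - 1)^2) * fact (card D - 2))
            + card {x\<in>D. P x} * (g^2 * fact (card D - 2))"
        using less.prems by (simp add: sum.If_cases Int_def conj_commute)
      also have "\<dots> = card {x\<in>D. P x} * g^2 * fact (card D - 2) + g * ((g - 1) + (g - 1)^2) * fact (card D - 2)"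
        unfolding g_def by (simp only: mult.assoc)
      also have "\<dots> = g^2 * ((card D - 1) * fact (card D - 2))"
      proof (rule arith_T[OF _ m2])
        have "card {x\<in>D. P x} + card {x\<in>D. \<not> P x} = card D"
        proof -
          have "{x\<in>D. P x} \<union> {x\<in>D. \<not> P x} = D" by auto
          moreover have "card ({x\<in>D. P x} \<union> {x\<in>D. \<not> P x}) = card {x\<in>D. P x} + card {x\<in>D. \<not> P x}"
            by (rule card_Un_disjoint) (use less.prems in auto)
          ultimately show ?thesis by simp
        qed
        then show "card {x\<in>D. P x} + g = card D" unfolding g_def .
      qed
      also have "(card D - 1) * fact (card D - 2) = fact (card D - 1)"
      proof -
        have "card D - 1 = Suc (card D - 2)" using m2 by simp
        then show ?thesis by (simp only: fact_Suc of_nat_id)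
      qed
      finally show ?thesis unfolding g_def .
    qed
  qed
qed

lemma GL:
  assumes "\<And>x. \<not> (B x \<and> G x)"
  shows "(\<forall>j<length xs. B (xs!j) \<longrightarrow> (\<exists>l. j < l \<and> l < length xs \<and> G (xs!l)))
     \<longleftrightarrow> (filter (\<lambda>x. B x \<or> G x) xs = [] \<or> \<not> B (last (filter (\<lambda>x. B x \<or> G x) xs)))"
proof (induction xs rule: rev_induct)
  case Nil then show ?case by simp
next
  case (snoc x xs)
  show ?case
  proof (cases "B x")
    case True
    then have "\<not> G x" using assms by blast
    have l: "\<not> (\<forall>j<length (xs @ [x]). B ((xs @ [x])!j) \<longrightarrow> (\<exists>l. j < l \<and> l < length (xs @ [x]) \<and> G ((xs @ [x])!l)))"
      using True by (auto intro!: exI[of _ "length xs"])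
    then show ?thesis using True by simp
  next
    case nB: False
    show ?thesis
    proof (cases "G x")
      case True
      have "(\<forall>j<length (xs @ [x]). B ((xs @ [x])!j) \<longrightarrow> (\<exists>l. j < l \<and> l < length (xs @ [x]) \<and> G ((xs @ [x])!l)))"
      proof (intro allI impI)
        fix j assume j: "j < length (xs @ [x])" "B ((xs @ [x]) ! j)"
        then have "j < length xs" using nB by (auto simp: nth_append split: if_splits)
        then show "\<exists>l. j < l \<and> l < length (xs @ [x]) \<and> G ((xs @ [x])!l)"
          using True by (auto intro!: exI[of _ "length xs"])
      qed
      then show ?thesis using True nB by simp
    next
      case nG: False
      have "(\<forall>j<length (xs @ [x]). B ((xs @ [x])!j) \<longrightarrow> (\<exists>l. j < l \<and> l < length (xs @ [x]) \<and> G ((xs @ [x])!l)))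
        \<longleftrightarrow> (\<forall>j<length xs. B (xs!j) \<longrightarrow> (\<exists>l. j < l \<and> l < length xs \<and> G (xs!l)))"
      proof
        assume h: "\<forall>j<length (xs @ [x]). B ((xs @ [x])!j) \<longrightarrow> (\<exists>l. j < l \<and> l < length (xs @ [x]) \<and> G ((xs @ [x])!l))"
        show "\<forall>j<length xs. B (xs!j) \<longrightarrow> (\<exists>l. j < l \<and> l < length xs \<and> G (xs!l))"
        proof (intro allI impI)
          fix j assume j: "j < length xs" "B (xs!j)"
          then have jj: "j < length (xs @ [x])" "B ((xs @ [x])!j)" by (auto simp: nth_append)
          then obtain l where "j < l" "l < length (xs @ [x])" "G ((xs @ [x])!l)"
            using h by blast
          then show "\<exists>l. j < l \<and> l < length xs \<and> G (xs!l)"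
            using nG by (auto simp: nth_append split: if_splits)
        qed
      next
        assume h: "\<forall>j<length xs. B (xs!j) \<longrightarrow> (\<exists>l. j < l \<and> l < length xs \<and> G (xs!l))"
        show "\<forall>j<length (xs @ [x]). B ((xs @ [x])!j) \<longrightarrow> (\<exists>l. j < l \<and> l < length (xs @ [x]) \<and> G ((xs @ [x])!l))"
        proof (intro allI impI)
          fix j assume j: "j < length (xs @ [x])" "B ((xs @ [x])!j)"
          then have j': "j < length xs" "B (xs!j)" using nB by (auto simp: nth_append split: if_splits)
          then obtain l where "j < l" "l < length xs" "G (xs!l)" using h by auto
          then show "\<exists>l. j < l \<and> l < length (xs @ [x]) \<and> G ((xs @ [x])!l)"
            by (auto simp: nth_append intro!: exI[of _ l])
        qed
      qed
      then show ?thesis using snoc.IH nB nG by simp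
    qed
  qed
qed

lemma GR:
  assumes "\<And>x. \<not> (B x \<and> G x)"
  shows "(\<forall>j<length ys. B (ys!j) \<longrightarrow> (\<exists>l<j. G (ys!l)))
     \<longleftrightarrow> (filter (\<lambda>x. B x \<or> G x) ys = [] \<or> \<not> B (hd (filter (\<lambda>x. B x \<or> G x) ys)))"
proof (induction ys)
  case Nil then show ?case by simp
next
  case (Cons y ys)
  show ?case
  proof (cases "B y")
    case True
    then have "\<not> G y" using assms by blast
    have "\<not> (\<forall>j<length (y # ys). B ((y # ys)!j) \<longrightarrow> (\<exists>l<j. G ((y # ys)!l)))"
      using True by (auto intro!: exI[of _ 0])
    then show ?thesis using True by simp
  next
    case nB: False
    show ?thesis
    proof (cases "G y")
      case True
      have "(\<forall>j<length (y # ys). B ((y # ys)!j) \<longrightarrow> (\<exists>l<j. G ((y # ys)!l)))"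
      proof (intro allI impI)
        fix j assume j: "j < length (y # ys)" "B ((y # ys)!j)"
        then have "j > 0" using nB by (cases j) auto
        then show "\<exists>l<j. G ((y # ys)!l)" using True by (auto intro!: exI[of _ 0])
      qed
      then show ?thesis using True nB by simp
    next
      case nG: False
      have "(\<forall>j<length (y # ys). B ((y # ys)!j) \<longrightarrow> (\<exists>l<j. G ((y # ys)!l)))
         \<longleftrightarrow> (\<forall>j<length ys. B (ys!j) \<longrightarrow> (\<exists>l<j. G (ys!l)))"
      proof
        assume h: "\<forall>j<length (y # ys). B ((y # ys)!j) \<longrightarrow> (\<exists>l<j. G ((y # ys)!l))"
        show "\<forall>j<length ys. B (ys!j) \<longrightarrow> (\<exists>l<j. G (ys!l))"
        proof (intro allI impI)
          fix j assume j: "j < length ys" "B (ys!j)"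
          then obtain l where l: "l < Suc j" "G ((y # ys)!l)" using h[rule_format, of "Suc j"] by auto
          then have "l \<noteq> 0" using nG by (cases l) auto
          then show "\<exists>l<j. G (ys!l)" using l by (cases l) auto
        qed
      next
        assume h: "\<forall>j<length ys. B (ys!j) \<longrightarrow> (\<exists>l<j. G (ys!l))"
        show "\<forall>j<length (y # ys). B ((y # ys)!j) \<longrightarrow> (\<exists>l<j. G ((y # ys)!l))"
        proof (intro allI impI)
          fix j assume j: "j < length (y # ys)" "B ((y # ys)!j)"
          then obtain j' where j': "j = Suc j'" using nB by (cases j) auto
          then obtain l where "l < j'" "G (ys!l)" using h j by auto
          then show "\<exists>l<j. G ((y # ys)!l)" using j' by (auto intro!: exI[of _ "Suc l"])
        qed
      qed
      then show ?thesis using Cons.IH nB nG by simp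
    qed
  qed
qed

lemma GV:
  assumes "\<And>x. \<not> (B x \<and> G x)"
  shows "(\<exists>j<length xs. G (xs!j) \<and> (\<forall>l. j < l \<and> l < length xs \<longrightarrow> \<not> B (xs!l)))
     \<longleftrightarrow> (filter (\<lambda>x. B x \<or> G x) xs \<noteq> [] \<and> \<not> B (last (filter (\<lambda>x. B x \<or> G x) xs)))"
proof (induction xs rule: rev_induct)
  case Nil then show ?case by simp
next
  case (snoc x xs)
  show ?case
  proof (cases "B x")
    case True
    have "\<not> (\<exists>j<length (xs @ [x]). G ((xs @ [x])!j) \<and> (\<forall>l. j < l \<and> l < length (xs @ [x]) \<longrightarrow> \<not> B ((xs @ [x])!l)))"
    proof
      assume "\<exists>j<length (xs @ [x]). G ((xs @ [x])!j) \<and> (\<forall>l. j < l \<and> l < length (xs @ [x]) \<longrightarrow> \<not> B ((xs @ [x])!l))"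
      then obtain j where j: "j < length (xs @ [x])" "G ((xs @ [x])!j)"
        "\<forall>l. j < l \<and> l < length (xs @ [x]) \<longrightarrow> \<not> B ((xs @ [x])!l)" by blast
      show False
      proof (cases "j = length xs")
        case True then show False using j(2) \<open>B x\<close> assms by auto
      next
        case False then show False using j(1) j(3)[rule_format, of "length xs"] \<open>B x\<close> by auto
      qed
    qed
    then show ?thesis using True by simp
  next
    case nB: False
    show ?thesis
    proof (cases "G x")
      case True
      then show ?thesis using nB by (auto intro!: exI[of _ "length xs"])
    next
      case nG: False
      have "(\<exists>j<length (xs @ [x]). G ((xs @ [x])!j) \<and> (\<forall>l. j < l \<and> l < length (xs @ [x]) \<longrightarrow> \<not> B ((xs @ [x])!l)))
        \<longleftrightarrow> (\<exists>j<length xs. G (xs!j) \<and> (\<forall>l. j < l \<and> l < length xs \<longrightarrow> \<not> B (xs!l)))"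
      proof
        assume "\<exists>j<length (xs @ [x]). G ((xs @ [x])!j) \<and> (\<forall>l. j < l \<and> l < length (xs @ [x]) \<longrightarrow> \<not> B ((xs @ [x])!l))"
        then obtain j where j: "j < length (xs @ [x])" "G ((xs @ [x])!j)"
          "\<forall>l. j < l \<and> l < length (xs @ [x]) \<longrightarrow> \<not> B ((xs @ [x])!l)" by blast
        have "j < length xs" using j nG by (cases "j = length xs") auto
        then show "\<exists>j<length xs. G (xs!j) \<and> (\<forall>l. j < l \<and> l < length xs \<longrightarrow> \<not> B (xs!l))"
          using j by (auto simp: nth_append intro!: exI[of _ j])
      next
        assume "\<exists>j<length xs. G (xs!j) \<and> (\<forall>l. j < l \<and> l < length xs \<longrightarrow> \<not> B (xs!l))"
        then obtain j where j: "j < length xs" "G (xs!j)" "\<forall>l. j < l \<and> l < length xs \<longrightarrow> \<not> B (xs!l)" by blast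
        show "\<exists>j<length (xs @ [x]). G ((xs @ [x])!j) \<and> (\<forall>l. j < l \<and> l < length (xs @ [x]) \<longrightarrow> \<not> B ((xs @ [x])!l))"
          using j nB by (auto simp: nth_append less_Suc_eq intro!: exI[of _ j])
      qed
      then show ?thesis using snoc.IH nB nG by simp
    qed
  qed
qed

definition pkI :: "nat \<Rightarrow> nat list \<Rightarrow> nat \<Rightarrow> bool" where
  "pkI k w i \<longleftrightarrow> (\<forall>j<i. w!i < w!j \<longrightarrow> (\<exists>l. j < l \<and> l < i \<and> w!l + k \<le> w!i)) \<and>
     (\<forall>j. i < j \<and> j < length w \<and> w!i < w!j \<longrightarrow> (\<exists>l. i < l \<and> l < j \<and> w!l + k \<le> w!i))"

definition vlI :: "nat \<Rightarrow> nat list \<Rightarrow> nat \<Rightarrow> bool" where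
  "vlI k w i \<longleftrightarrow> (\<exists>j<i. w!i + k \<le> w!j \<and> (\<forall>l. j < l \<and> l < i \<longrightarrow> w!i \<le> w!l)) \<and>
     (\<forall>j. i < j \<and> j < length w \<and> w!j < w!i \<longrightarrow> (\<exists>l. i < l \<and> l < j \<and> w!i + k \<le> w!l))"

lemma right_reindex:
  assumes "i < length w"
  shows "(\<forall>j. i < j \<and> j < length w \<and> B (w!j) \<longrightarrow> (\<exists>l. i < l \<and> l < j \<and> G (w!l)))
    \<longleftrightarrow> (\<forall>j<length (drop (Suc i) w). B (drop (Suc i) w ! j) \<longrightarrow> (\<exists>l<j. G (drop (Suc i) w ! l)))"
proof
  assume h: "\<forall>j. i < j \<and> j < length w \<and> B (w!j) \<longrightarrow> (\<exists>l. i < l \<and> l < j \<and> G (w!l))"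
  show "\<forall>j<length (drop (Suc i) w). B (drop (Suc i) w ! j) \<longrightarrow> (\<exists>l<j. G (drop (Suc i) w ! l))"
  proof (intro allI impI)
    fix j assume j: "j < length (drop (Suc i) w)" "B (drop (Suc i) w ! j)"
    have "i < Suc i + j \<and> Suc i + j < length w \<and> B (w!(Suc i + j))" using j by auto
    then obtain l where l: "i < l" "l < Suc i + j" "G (w!l)" using h by blast
    then have "l - Suc i < j" "drop (Suc i) w ! (l - Suc i) = w ! l" using j by auto
    then show "\<exists>l<j. G (drop (Suc i) w ! l)" using l by metis
  qed
next
  assume h: "\<forall>j<length (drop (Suc i) w). B (drop (Suc i) w ! j) \<longrightarrow> (\<exists>l<j. G (drop (Suc i) w ! l))"
  show "\<forall>j. i < j \<and> j < length w \<and> B (w!j) \<longrightarrow> (\<exists>l. i < l \<and> l < j \<and> G (w!l))"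
  proof (intro allI impI)
    fix j assume j: "i < j \<and> j < length w \<and> B (w!j)"
    then have "j - Suc i < length (drop (Suc i) w)" "B (drop (Suc i) w ! (j - Suc i))" by auto
    then obtain l where l: "l < j - Suc i" "G (drop (Suc i) w ! l)" using h by blast
    then show "\<exists>l. i < l \<and> l < j \<and> G (w!l)" using j by (auto intro!: exI[of _ "Suc i + l"])
  qed
qed

lemma left_reindex:
  assumes "i < length w"
  shows "(\<forall>j<i. B (w!j) \<longrightarrow> (\<exists>l. j < l \<and> l < i \<and> G (w!l)))
    \<longleftrightarrow> (\<forall>j<length (take i w). B (take i w ! j) \<longrightarrow> (\<exists>l. j < l \<and> l < length (take i w) \<and> G (take i w ! l)))"
proof
  assume h: "\<forall>j<i. B (w!j) \<longrightarrow> (\<exists>l. j < l \<and> l < i \<and> G (w!l))"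
  show "\<forall>j<length (take i w). B (take i w ! j) \<longrightarrow> (\<exists>l. j < l \<and> l < length (take i w) \<and> G (take i w ! l))"
  proof (intro allI impI)
    fix j assume "j < length (take i w)" "B (take i w ! j)"
    then have "j < i" "B (w!j)" using assms by auto
    then obtain l where "j < l" "l < i" "G (w!l)" using h by blast
    then show "\<exists>l. j < l \<and> l < length (take i w) \<and> G (take i w ! l)" using assms by (intro exI[of _ l]) auto
  qed
next
  assume h: "\<forall>j<length (take i w). B (take i w ! j) \<longrightarrow> (\<exists>l. j < l \<and> l < length (take i w) \<and> G (take i w ! l))"
  show "\<forall>j<i. B (w!j) \<longrightarrow> (\<exists>l. j < l \<and> l < i \<and> G (w!l))"
  proof (intro allI impI)
    fix j assume "j < i" "B (w!j)"
    then have "j < length (take i w)" "B (take i w ! j)" using assms by auto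
    then obtain l where "j < l" "l < length (take i w)" "G (take i w ! l)" using h by blast
    then show "\<exists>l. j < l \<and> l < i \<and> G (w!l)" using assms by (intro exI[of _ l]) auto
  qed
qed

lemma leftV_reindex:
  assumes "i < length w"
  shows "(\<exists>j<i. G (w!j) \<and> (\<forall>l. j < l \<and> l < i \<longrightarrow> \<not> B (w!l)))
    \<longleftrightarrow> (\<exists>j<length (take i w). G (take i w ! j) \<and> (\<forall>l. j < l \<and> l < length (take i w) \<longrightarrow> \<not> B (take i w ! l)))"
proof
  assume "\<exists>j<i. G (w!j) \<and> (\<forall>l. j < l \<and> l < i \<longrightarrow> \<not> B (w!l))"
  then obtain j where j: "j < i" "G (w!j)" "\<forall>l. j < l \<and> l < i \<longrightarrow> \<not> B (w!l)" by blast
  show "\<exists>j<length (take i w). G (take i w ! j) \<and> (\<forall>l. j < l \<and> l < length (take i w) \<longrightarrow> \<not> B (take i w ! l))"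
    using j assms by (intro exI[of _ j]) auto
next
  assume "\<exists>j<length (take i w). G (take i w ! j) \<and> (\<forall>l. j < l \<and> l < length (take i w) \<longrightarrow> \<not> B (take i w ! l))"
  then obtain j where j: "j < length (take i w)" "G (take i w ! j)" "\<forall>l. j < l \<and> l < length (take i w) \<longrightarrow> \<not> B (take i w ! l)" by blast
  show "\<exists>j<i. G (w!j) \<and> (\<forall>l. j < l \<and> l < i \<longrightarrow> \<not> B (w!l))"
    using j assms by (intro exI[of _ j]) auto
qed

lemma split_filter:
  assumes "distinct w" "i < length w"
  shows "filter (\<lambda>x. B x \<or> G x \<or> x = w!i) w
     = filter (\<lambda>x. B x \<or> G x) (take i w) @ w!i # filter (\<lambda>x. B x \<or> G x) (drop (Suc i) w)"
    "w!i \<notin> set (filter (\<lambda>x. B x \<or> G x) (take i w))"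
proof -
  have w: "w = take i w @ w!i # drop (Suc i) w" using assms by (simp add: id_take_nth_drop)
  then have d: "distinct (take i w @ w!i # drop (Suc i) w)" using assms by simp
  then have n1: "w!i \<notin> set (take i w)" and n2: "w!i \<notin> set (drop (Suc i) w)" by auto
  have "filter (\<lambda>x. B x \<or> G x \<or> x = w!i) w = filter (\<lambda>x. B x \<or> G x \<or> x = w!i) (take i w @ w!i # drop (Suc i) w)"
    using w by simp
  also have "\<dots> = filter (\<lambda>x. B x \<or> G x) (take i w) @ w!i # filter (\<lambda>x. B x \<or> G x) (drop (Suc i) w)"
  proof -
    have "filter (\<lambda>x. B x \<or> G x \<or> x = w!i) (take i w) = filter (\<lambda>x. B x \<or> G x) (take i w)"
      using n1 by (intro filter_cong) auto
    moreover have "filter (\<lambda>x. B x \<or> G x \<or> x = w!i) (drop (Suc i) w) = filter (\<lambda>x. B x \<or> G x) (drop (Suc i) w)"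
      using n2 by (intro filter_cong) auto
    ultimately show ?thesis by simp
  qed
  finally show "filter (\<lambda>x. B x \<or> G x \<or> x = w!i) w
     = filter (\<lambda>x. B x \<or> G x) (take i w) @ w!i # filter (\<lambda>x. B x \<or> G x) (drop (Suc i) w)" .
  show "w!i \<notin> set (filter (\<lambda>x. B x \<or> G x) (take i w))" using n1 by simp
qed

lemma pk_filter:
  assumes "distinct w" "i < length w"
  shows "pkI k w i \<longleftrightarrow> nbok True (\<lambda>x. w!i < x) (w!i) None (filter (\<lambda>x. w!i < x \<or> x + k \<le> w!i \<or> x = w!i) w)"
proof -
  define B where "B = (\<lambda>x. w!i < x)"
  define G where "G = (\<lambda>x. x + k \<le> w!i)"
  have disj: "\<And>x. \<not> (B x \<and> G x)" unfolding B_def G_def by auto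
  have "nbok True (\<lambda>x. w!i < x) (w!i) None (filter (\<lambda>x. w!i < x \<or> x + k \<le> w!i \<or> x = w!i) w)
    = nbok True B (w!i) None (filter (\<lambda>x. B x \<or> G x \<or> x = w!i) w)" unfolding B_def G_def by simp
  also have "\<dots> = ((filter (\<lambda>x. B x \<or> G x) (take i w) = [] \<or> \<not> B (last (filter (\<lambda>x. B x \<or> G x) (take i w))))
      \<and> (filter (\<lambda>x. B x \<or> G x) (drop (Suc i) w) = [] \<or> \<not> B (hd (filter (\<lambda>x. B x \<or> G x) (drop (Suc i) w)))))"
    unfolding split_filter[OF assms] using nbok_append[OF split_filter(2)[OF assms]] by simp
  also have "\<dots> = ((\<forall>j<i. B (w!j) \<longrightarrow> (\<exists>l. j < l \<and> l < i \<and> G (w!l))) \<and>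
       (\<forall>j. i < j \<and> j < length w \<and> B (w!j) \<longrightarrow> (\<exists>l. i < l \<and> l < j \<and> G (w!l))))"
  proof -
    have L: "(\<forall>j<i. B (w!j) \<longrightarrow> (\<exists>l. j < l \<and> l < i \<and> G (w!l))) \<longleftrightarrow> (filter (\<lambda>x. B x \<or> G x) (take i w) = [] \<or> \<not> B (last (filter (\<lambda>x. B x \<or> G x) (take i w))))"
      using left_reindex[OF assms(2), of B G] GL[OF disj, of "take i w"] by (rule trans)
    have R: "(\<forall>j. i < j \<and> j < length w \<and> B (w!j) \<longrightarrow> (\<exists>l. i < l \<and> l < j \<and> G (w!l))) \<longleftrightarrow> (filter (\<lambda>x. B x \<or> G x) (drop (Suc i) w) = [] \<or> \<not> B (hd (filter (\<lambda>x. B x \<or> G x) (drop (Suc i) w))))"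
      using right_reindex[OF assms(2), of B G] GR[OF disj, of "drop (Suc i) w"] by (rule trans)
    show ?thesis by (simp only: L R)
  qed
  also have "\<dots> = pkI k w i" unfolding pkI_def B_def G_def ..
  finally show ?thesis ..
qed

lemma vl_filter:
  assumes "distinct w" "i < length w"
  shows "vlI k w i \<longleftrightarrow> nbok False (\<lambda>x. x < w!i) (w!i) None (filter (\<lambda>x. x < w!i \<or> w!i + k \<le> x \<or> x = w!i) w)"
proof -
  define B where "B = (\<lambda>x. x < w!i)"
  define G where "G = (\<lambda>x. w!i + k \<le> x)"
  have disj: "\<And>x. \<not> (B x \<and> G x)" unfolding B_def G_def by auto
  have "nbok False (\<lambda>x. x < w!i) (w!i) None (filter (\<lambda>x. x < w!i \<or> w!i + k \<le> x \<or> x = w!i) w)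
    = nbok False B (w!i) None (filter (\<lambda>x. B x \<or> G x \<or> x = w!i) w)" unfolding B_def G_def by simp
  also have "\<dots> = ((filter (\<lambda>x. B x \<or> G x) (take i w) \<noteq> [] \<and> \<not> B (last (filter (\<lambda>x. B x \<or> G x) (take i w))))
      \<and> (filter (\<lambda>x. B x \<or> G x) (drop (Suc i) w) = [] \<or> \<not> B (hd (filter (\<lambda>x. B x \<or> G x) (drop (Suc i) w)))))"
    unfolding split_filter[OF assms] using nbok_append[OF split_filter(2)[OF assms]] by simp
  also have "\<dots> = ((\<exists>j<i. G (w!j) \<and> (\<forall>l. j < l \<and> l < i \<longrightarrow> \<not> B (w!l))) \<and>
       (\<forall>j. i < j \<and> j < length w \<and> B (w!j) \<longrightarrow> (\<exists>l. i < l \<and> l < j \<and> G (w!l))))"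
  proof -
    have L: "(\<exists>j<i. G (w!j) \<and> (\<forall>l. j < l \<and> l < i \<longrightarrow> \<not> B (w!l))) \<longleftrightarrow> (filter (\<lambda>x. B x \<or> G x) (take i w) \<noteq> [] \<and> \<not> B (last (filter (\<lambda>x. B x \<or> G x) (take i w))))"
      using leftV_reindex[OF assms(2), of G B] GV[OF disj, of "take i w"] by (rule trans)
    have R: "(\<forall>j. i < j \<and> j < length w \<and> B (w!j) \<longrightarrow> (\<exists>l. i < l \<and> l < j \<and> G (w!l))) \<longleftrightarrow> (filter (\<lambda>x. B x \<or> G x) (drop (Suc i) w) = [] \<or> \<not> B (hd (filter (\<lambda>x. B x \<or> G x) (drop (Suc i) w))))"
      using right_reindex[OF assms(2), of B G] GR[OF disj, of "drop (Suc i) w"] by (rule trans)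
    show ?thesis by (simp only: L R)
  qed
  also have "\<dots> = vlI k w i" unfolding vlI_def B_def G_def by (simp add: not_less)
  finally show ?thesis ..
qed

lemma hd_split_count:
  assumes "finite D" "v \<notin> D"
  shows "card {u\<in>permutations_of_set (insert v D). Q u}
     = card {u\<in>permutations_of_set (insert v D). hd u \<noteq> v \<and> Q u} + card {u\<in>permutations_of_set D. Q (v # u)}"
proof -
  have fi: "finite (insert v D)" using assms by simp
  have "card {u\<in>permutations_of_set (insert v D). Q u}
     = (\<Sum>y\<in>insert v D. card {w\<in>permutations_of_set (insert v D - {y}). Q (y # w)})"
    by (rule card_perms_split[OF fi]) simp
  also have "\<dots> = card {w\<in>permutations_of_set D. Q (v # w)} + (\<Sum>y\<in>D. card {w\<in>permutations_of_set (insert v D - {y}). Q (y # w)})"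
    using assms by (simp add: sum.insert)
  also have "(\<Sum>y\<in>D. card {w\<in>permutations_of_set (insert v D - {y}). Q (y # w)})
     = (\<Sum>y\<in>D. card {w\<in>permutations_of_set (insert v D - {y}). hd (y # w) \<noteq> v \<and> Q (y # w)})"
    by (intro sum.cong refl arg_cong[where f=card] Collect_cong) (use assms in auto)
  also have "\<dots> = (\<Sum>y\<in>insert v D. card {w\<in>permutations_of_set (insert v D - {y}). hd (y # w) \<noteq> v \<and> Q (y # w)})"
    using assms by (simp add: sum.insert)
  also have "\<dots> = card {u\<in>permutations_of_set (insert v D). hd u \<noteq> v \<and> Q u}"
    by (rule card_perms_split[OF fi, symmetric]) simp
  finally show ?thesis by simp
qed

lemma PK_total:
  assumes "finite D" "v \<notin> D" "D \<noteq> {}"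
  shows "card {u\<in>permutations_of_set (insert v D). nbok True P v None u}
     = card {x\<in>D. \<not> P x}^2 * fact (card D - 1) + card {x\<in>D. \<not> P x} * fact (card D - 1)"
proof -
  have "card {u\<in>permutations_of_set D. nbok True P v None (v # u)} = card {u\<in>permutations_of_set D. u = [] \<or> \<not> P (hd u)}"
    by simp
  then show ?thesis using hd_split_count[OF assms(1,2), of "nbok True P v None"] Tp_count[OF assms(1,2)] H_count[OF assms(1,3)]
    by simp
qed

lemma VL_total:
  assumes "finite D" "v \<notin> D"
  shows "card {u\<in>permutations_of_set (insert v D). nbok False P v None u}
     = card {x\<in>D. \<not> P x}^2 * fact (card D - 1)"
proof -
  have "card {u\<in>permutations_of_set D. nbok False P v None (v # u)} = 0"
    by simp
  then show ?thesis using hd_split_count[OF assms(1,2), of "nbok False P v None"] Tp_count[OF assms(1,2)]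
    by simp
qed

lemma win_pk:
  assumes "lo \<le> r" "r < hi" "hi \<le> length w" "\<forall>l. lo \<le> l \<and> l < hi \<longrightarrow> w!l \<le> w!r"
    "lo = 0 \<or> w!(lo - 1) + k \<le> w!r" "hi = length w \<or> w!hi + k \<le> w!r" "1 \<le> k"
  shows "pkI k w r"
  unfolding pkI_def
proof (intro conjI allI impI)
  fix j assume j: "j < r" "w!r < w!j"
  have "j < lo"
  proof (rule ccontr)
    assume "\<not> j < lo"
    then have "lo \<le> j \<and> j < hi" using j assms(2) by auto
    then show False using assms(4) j by fastforce
  qed
  then have lo: "lo \<noteq> 0" "w!(lo - 1) + k \<le> w!r" using assms(5) by auto
  then have "j \<noteq> lo - 1" using j assms(7) by auto
  then show "\<exists>l. j < l \<and> l < r \<and> w!l + k \<le> w!r"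
    using \<open>j < lo\<close> lo assms(1) by (intro exI[of _ "lo - 1"]) auto
next
  fix j assume j: "r < j \<and> j < length w \<and> w!r < w!j"
  have "hi \<le> j"
  proof (rule ccontr)
    assume "\<not> hi \<le> j"
    then have "lo \<le> j \<and> j < hi" using j assms(1) by auto
    then show False using assms(4) j by fastforce
  qed
  then have hi: "hi \<noteq> length w" "w!hi + k \<le> w!r" using assms(6) j by auto
  then have "j \<noteq> hi" using j assms(7) by auto
  then show "\<exists>l. r < l \<and> l < j \<and> w!l + k \<le> w!r"
    using \<open>hi \<le> j\<close> hi assms(2) by (intro exI[of _ hi]) auto
qed

lemma win_vl:
  assumes "lo \<le> r" "r < hi" "hi \<le> length w" "\<forall>l. lo \<le> l \<and> l < hi \<longrightarrow> w!r \<le> w!l"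
    "lo \<noteq> 0" "w!r + k \<le> w!(lo - 1)" "hi = length w \<or> w!r + k \<le> w!hi" "1 \<le> k"
  shows "vlI k w r"
  unfolding vlI_def
proof (intro conjI allI impI)
  show "\<exists>j<r. w!r + k \<le> w!j \<and> (\<forall>l. j < l \<and> l < r \<longrightarrow> w!r \<le> w!l)"
    using assms by (intro exI[of _ "lo - 1"]) auto
next
  fix j assume j: "r < j \<and> j < length w \<and> w!j < w!r"
  have "hi \<le> j"
  proof (rule ccontr)
    assume "\<not> hi \<le> j"
    then have "lo \<le> j \<and> j < hi" using j assms(1) by auto
    then show False using assms(4) j by fastforce
  qed
  then have hi: "hi \<noteq> length w" "w!r + k \<le> w!hi" using assms(7) j by auto
  then have "j \<noteq> hi" using j assms(8) by auto
  then show "\<exists>l. r < l \<and> l < j \<and> w!r + k \<le> w!l"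
    using \<open>hi \<le> j\<close> hi assms(2) by (intro exI[of _ hi]) auto
qed

lemma ex_argmax:
  fixes f :: "nat \<Rightarrow> nat"
  assumes "lo < hi"
  shows "\<exists>r. lo \<le> r \<and> r < hi \<and> (\<forall>l. lo \<le> l \<and> l < hi \<longrightarrow> f l \<le> f r)"
proof -
  have ne: "f ` {lo..<hi} \<noteq> {}" using assms by auto
  obtain r where r: "r \<in> {lo..<hi}" "f r = Max (f ` {lo..<hi})" using Max_in[OF _ ne] by auto
  show ?thesis using r by (intro exI[of _ r]) auto
qed

lemma ex_argmin:
  fixes f :: "nat \<Rightarrow> nat"
  assumes "lo < hi"
  shows "\<exists>r. lo \<le> r \<and> r < hi \<and> (\<forall>l. lo \<le> l \<and> l < hi \<longrightarrow> f r \<le> f l)"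
proof -
  have ne: "f ` {lo..<hi} \<noteq> {}" using assms by auto
  obtain r where r: "r \<in> {lo..<hi}" "f r = Min (f ` {lo..<hi})" using Min_in[OF _ ne] by auto
  show ?thesis using r by (intro exI[of _ r]) auto
qed

lemma pk_not_vl:
  assumes "pkI k w i" "vlI k w i" "1 \<le> k" shows False
proof -
  obtain j where j: "j < i" "w!i + k \<le> w!j" "\<forall>l. j < l \<and> l < i \<longrightarrow> w!i \<le> w!l"
    using assms(2) unfolding vlI_def by blast
  have "w!i < w!j" using j assms(3) by auto
  then obtain l where "j < l" "l < i" "w!l + k \<le> w!i" using assms(1) j(1) unfolding pkI_def by blast
  then show False using j(3) assms(3) by fastforce
qed

lemma cons_pk:
  assumes d: "distinct w" and k: "1 \<le> k" and ab: "a < b" "b < length w"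
    and btw: "\<forall>c. a < c \<and> c < b \<longrightarrow> \<not> pkI k w c \<and> \<not> vlI k w c"
    and pa: "pkI k w a" and bS: "pkI k w b \<or> vlI k w b"
  shows "vlI k w b \<and> w!b + k \<le> w!a"
proof -
  have neq: "w!a \<noteq> w!b" using d ab nth_eq_iff_index_eq[of w a b] by auto
  have paL: "\<And>j. j < a \<Longrightarrow> w!a < w!j \<Longrightarrow> \<exists>l. j < l \<and> l < a \<and> w!l + k \<le> w!a"
    using pa unfolding pkI_def by blast
  have paR: "\<And>j. a < j \<Longrightarrow> j < length w \<Longrightarrow> w!a < w!j \<Longrightarrow> \<exists>l. a < l \<and> l < j \<and> w!l + k \<le> w!a"
    using pa unfolding pkI_def by blast
  have vb: "vlI k w b"
  proof (rule ccontr)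
    assume "\<not> vlI k w b"
    then have pb: "pkI k w b" using bS by blast
    obtain l where l: "a < l" "l < b" "w!l + k \<le> w!a" "w!l + k \<le> w!b"
    proof (cases "w!a < w!b")
      case True
      then obtain l where "a < l" "l < b" "w!l + k \<le> w!a" using paR[of b] ab by blast
      then show ?thesis using that True by auto
    next
      case False
      then have "w!b < w!a" using neq by auto
      then obtain l where "a < l" "l < b" "w!l + k \<le> w!b" using pb ab unfolding pkI_def by blast
      then show ?thesis using that \<open>w!b < w!a\<close> by auto
    qed
    obtain r where r: "Suc a \<le> r" "r < b" "\<forall>l. Suc a \<le> l \<and> l < b \<longrightarrow> w!r \<le> w!l"
      using ex_argmin[of "Suc a" b "\<lambda>i. w!i"] l by auto
    have "vlI k w r"
    proof (rule win_vl[OF r(1,2) _ r(3) _ _ _ k])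
      show "b \<le> length w" using ab by simp
      show "Suc a \<noteq> 0" by simp
      have "w!r \<le> w!l" using r(3) l by auto
      then show "w!r + k \<le> w!(Suc a - 1)" using l by simp
      show "b = length w \<or> w!r + k \<le> w!b" using \<open>w!r \<le> w!l\<close> l by simp
    qed
    then show False using btw r by auto
  qed
  have "w!b + k \<le> w!a"
  proof (rule ccontr)
    assume nb: "\<not> w!b + k \<le> w!a"
    obtain j where j: "j < b" "w!b + k \<le> w!j" "\<forall>l. j < l \<and> l < b \<longrightarrow> w!b \<le> w!l"
      using vb unfolding vlI_def by blast
    consider "j = a" | "j < a" | "a < j" by linarith
    then show False
    proof cases
      case 1 then show False using j nb by simp
    next
      case 2
      then have "w!b \<le> w!a" using j(3) ab by auto
      have "w!a < w!j" using nb j(2) by simp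
      then obtain l where l: "j < l" "l < a" "w!l + k \<le> w!a" using paL[OF 2] by blast
      then have "w!b \<le> w!l" using j(3) ab by auto
      then show False using l nb by simp
    next
      case 3
      have "w!a < w!j" using nb j(2) by simp
      then obtain l where l: "a < l" "l < j" "w!l + k \<le> w!a" using paR[OF 3] j(1) ab by auto
      obtain r where r: "Suc l \<le> r" "r < b" "\<forall>i. Suc l \<le> i \<and> i < b \<longrightarrow> w!i \<le> w!r"
        using ex_argmax[of "Suc l" b "\<lambda>i. w!i"] l j by auto
      have wj: "w!j \<le> w!r" using r(3) l j by auto
      have "pkI k w r"
      proof (rule win_pk[OF r(1,2) _ r(3) _ _ k])
        show "b \<le> length w" using ab by simp
        show "Suc l = 0 \<or> w!(Suc l - 1) + k \<le> w!r" using l wj \<open>w!a < w!j\<close> by simp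
        show "b = length w \<or> w!b + k \<le> w!r" using j(2) wj by simp
      qed
      then show False using btw r l by auto
    qed
  qed
  then show ?thesis using vb by simp
qed

lemma cons_vl:
  assumes d: "distinct w" and k: "1 \<le> k" and ab: "a < b" "b < length w"
    and btw: "\<forall>c. a < c \<and> c < b \<longrightarrow> \<not> pkI k w c \<and> \<not> vlI k w c"
    and va: "vlI k w a" and bS: "pkI k w b \<or> vlI k w b"
  shows "pkI k w b \<and> w!a + k \<le> w!b"
proof -
  have neq: "w!a \<noteq> w!b" using d ab nth_eq_iff_index_eq[of w a b] by auto
  obtain ja where ja: "ja < a" "w!a + k \<le> w!ja" "\<forall>l. ja < l \<and> l < a \<longrightarrow> w!a \<le> w!l"
    using va unfolding vlI_def by blast
  have vaR: "\<And>j. a < j \<Longrightarrow> j < length w \<Longrightarrow> w!j < w!a \<Longrightarrow> \<exists>l. a < l \<and> l < j \<and> w!a + k \<le> w!l"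
    using va unfolding vlI_def by blast
  have pb: "pkI k w b"
  proof (rule ccontr)
    assume "\<not> pkI k w b"
    then have vb: "vlI k w b" using bS by blast
    obtain l where l: "a < l" "l < b" "w!a + k \<le> w!l" "w!b + k \<le> w!l"
    proof (cases "w!b < w!a")
      case True
      then obtain l where "a < l" "l < b" "w!a + k \<le> w!l" using vaR[of b] ab by blast
      then show ?thesis using that True by auto
    next
      case False
      then have lt: "w!a < w!b" using neq by auto
      obtain j where j: "j < b" "w!b + k \<le> w!j" "\<forall>l. j < l \<and> l < b \<longrightarrow> w!b \<le> w!l"
        using vb unfolding vlI_def by blast
      have "\<not> j < a" using j(3) ab lt by auto
      moreover have "j \<noteq> a" using j(2) lt by auto
      ultimately have "a < j" by simp
      then show ?thesis using that j lt by auto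
    qed
    obtain r where r: "Suc a \<le> r" "r < b" "\<forall>i. Suc a \<le> i \<and> i < b \<longrightarrow> w!i \<le> w!r"
      using ex_argmax[of "Suc a" b "\<lambda>i. w!i"] l by auto
    have "w!l \<le> w!r" using r(3) l by auto
    have "pkI k w r"
    proof (rule win_pk[OF r(1,2) _ r(3) _ _ k])
      show "b \<le> length w" using ab by simp
      show "Suc a = 0 \<or> w!(Suc a - 1) + k \<le> w!r" using l \<open>w!l \<le> w!r\<close> by simp
      show "b = length w \<or> w!b + k \<le> w!r" using l \<open>w!l \<le> w!r\<close> by simp
    qed
    then show False using btw r by auto
  qed
  have "w!a + k \<le> w!b"
  proof (rule ccontr)
    assume nb: "\<not> w!a + k \<le> w!b"
    obtain l where l: "a < l" "l < b" "w!l < w!a"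
    proof (cases "w!b < w!a")
      case True
      then obtain l where "a < l" "l < b" "w!l + k \<le> w!b" using pb ab unfolding pkI_def by blast
      then show ?thesis using that True by auto
    next
      case False
      then have lt: "w!a < w!b" using neq by auto
      have "w!b < w!ja" using nb ja(2) by simp
      have "ja < b" using ja(1) ab by simp
      then obtain l where l: "ja < l" "l < b" "w!l + k \<le> w!b" using pb \<open>w!b < w!ja\<close> unfolding pkI_def by blast
      then have wl: "w!l < w!a" using nb by simp
      have "\<not> l < a" using ja(3) l(1) wl by auto
      moreover have "l \<noteq> a" using wl by auto
      ultimately have "a < l" by simp
      show ?thesis by (rule that[OF \<open>a < l\<close> l(2) wl])
    qed
    obtain l' where l': "a < l'" "l' < l" "w!a + k \<le> w!l'" using vaR[OF l(1) _ l(3)] l ab by auto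
    obtain r where r: "Suc a \<le> r" "r < l" "\<forall>i. Suc a \<le> i \<and> i < l \<longrightarrow> w!i \<le> w!r"
      using ex_argmax[of "Suc a" l "\<lambda>i. w!i"] l' by auto
    have wr: "w!l' \<le> w!r" using r(3) l' by auto
    have "pkI k w r"
    proof (rule win_pk[OF r(1,2) _ r(3) _ _ k])
      show "l \<le> length w" using l ab by simp
      show "Suc a = 0 \<or> w!(Suc a - 1) + k \<le> w!r" using l' wr by simp
      show "l = length w \<or> w!l + k \<le> w!r" using l' wr l(3) by simp
    qed
    then show False using btw r l by auto
  qed
  then show ?thesis using pb by simp
qed

lemma first_pk:
  assumes k: "1 \<le> k" and b: "b < length w" "pkI k w b \<or> vlI k w b"
    and mn: "\<forall>c<b. \<not> pkI k w c \<and> \<not> vlI k w c"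
  shows "pkI k w b"
proof (rule ccontr)
  assume "\<not> pkI k w b"
  then have "vlI k w b" using b by blast
  then obtain j where j: "j < b" "w!b + k \<le> w!j" unfolding vlI_def by blast
  obtain r where r: "0 \<le> r" "r < b" "\<forall>i. 0 \<le> i \<and> i < b \<longrightarrow> w!i \<le> w!r"
    using ex_argmax[of 0 b "\<lambda>i. w!i"] j by auto
  have "pkI k w r"
  proof (rule win_pk[OF r(1,2) _ r(3) _ _ k])
    show "b \<le> length w" using b by simp
    show "0 = 0 \<or> w!(0 - 1) + k \<le> w!r" by simp
    show "b = length w \<or> w!b + k \<le> w!r" using j r(3) by fastforce
  qed
  then show False using mn r by auto
qed

lemma exists_pk:
  assumes k: "1 \<le> k" and "w \<noteq> []"
  shows "\<exists>r<length w. pkI k w r"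
proof -
  obtain r where r: "0 \<le> r" "r < length w" "\<forall>i. 0 \<le> i \<and> i < length w \<longrightarrow> w!i \<le> w!r"
    using ex_argmax[of 0 "length w" "\<lambda>i. w!i"] assms by auto
  have "pkI k w r" by (rule win_pk[OF r(1,2) _ r(3) _ _ k]) simp_all
  then show ?thesis using r by blast
qed

lemma subseq_idx:
  "subseq xs ys \<Longrightarrow> \<exists>f. (\<forall>t<length xs. f t < length ys \<and> xs!t = ys!(f t)) \<and> (\<forall>s t. s < t \<longrightarrow> t < length xs \<longrightarrow> f s < f t)"
proof (induction rule: list_emb.induct)
  case (list_emb_Nil ys)
  then show ?case by auto
next
  case (list_emb_Cons xs ys y)
  then obtain f where f: "\<forall>t<length xs. f t < length ys \<and> xs!t = ys!(f t)" "\<forall>s t. s < t \<longrightarrow> t < length xs \<longrightarrow> f s < f t" by blast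
  show ?case using f by (intro exI[of _ "\<lambda>t. Suc (f t)"]) auto
next
  case (list_emb_Cons2 x y xs ys)
  then obtain f where f: "\<forall>t<length xs. f t < length ys \<and> xs!t = ys!(f t)" "\<forall>s t. s < t \<longrightarrow> t < length xs \<longrightarrow> f s < f t" by blast
  define g where "g t = (case t of 0 \<Rightarrow> 0 | Suc t' \<Rightarrow> Suc (f t'))" for t
  have "\<forall>t<length (x # xs). g t < length (y # ys) \<and> (x # xs)!t = (y # ys)!(g t)"
    using f(1) list_emb_Cons2.hyps by (auto simp: g_def split: nat.split)
  moreover have "\<forall>s t. s < t \<longrightarrow> t < length (x # xs) \<longrightarrow> g s < g t"
  proof (intro allI impI)
    fix s t assume "s < t" "t < length (x # xs)"
    then show "g s < g t" using f(2) by (cases s; cases t) (auto simp: g_def)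
  qed
  ultimately show ?case by blast
qed

lemma subseq_map_nth:
  "sorted_wrt (<) is \<Longrightarrow> \<forall>i\<in>set is. i < length w \<Longrightarrow> subseq (map (nth w) is) w"
proof (induction w arbitrary: "is")
  case Nil
  then show ?case by (cases "is") auto
next
  case (Cons y w)
  show ?case
  proof (cases "is")
    case Nil then show ?thesis by simp
  next
    case (Cons i is')
    have pos: "\<forall>j\<in>set is'. 0 < j" using Cons.prems Cons by auto
    have s': "sorted_wrt (<) (map (\<lambda>j. j - 1) is')"
      using Cons.prems Cons pos by (auto simp: sorted_wrt_map elim!: sorted_wrt_mono_rel[rotated])
    have b': "\<forall>j\<in>set (map (\<lambda>j. j - 1) is'). j < length w" using Cons.prems Cons pos by auto
    have m': "map (nth (y # w)) is' = map (nth w) (map (\<lambda>j. j - 1) is')"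
      using pos by (auto simp: nth_Cons')
    show ?thesis
    proof (cases "i = 0")
      case True
      have "subseq (map (nth w) (map (\<lambda>j. j - 1) is')) w" by (rule Cons.IH[OF s' b'])
      then have "subseq (map (nth (y # w)) is') w" by (simp only: m')
      then have "subseq (y # map (nth (y # w)) is') (y # w)" by (auto intro: list_emb_Cons2)
      then show ?thesis using True Cons by simp
    next
      case False
      have pos2: "\<forall>j\<in>set is. 0 < j" using pos False Cons by auto
      have s2: "sorted_wrt (<) (map (\<lambda>j. j - 1) is)"
        using Cons.prems pos2 by (auto simp: sorted_wrt_map elim!: sorted_wrt_mono_rel[rotated])
      have b2: "\<forall>j\<in>set (map (\<lambda>j. j - 1) is). j < length w" using Cons.prems pos2 by auto
      have m2: "map (nth (y # w)) is = map (nth w) (map (\<lambda>j. j - 1) is)"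
        using pos2 by (auto simp: nth_Cons')
      have "subseq (map (nth w) (map (\<lambda>j. j - 1) is)) w" by (rule Cons.IH[OF s2 b2])
      then have "subseq (map (nth (y # w)) is) w" by (simp only: m2)
      then show ?thesis by (rule list_emb_Cons)
    qed
  qed
qed

lemma alt_step:
  assumes "k_alternating k xs" "Suc t < length xs"
  shows "even t \<Longrightarrow> xs!(Suc t) + k \<le> xs!t" "odd t \<Longrightarrow> xs!t + k \<le> xs!(Suc t)"
proof -
  have h: "(if even t then xs!t > xs!(Suc t) else xs!t < xs!(Suc t)) \<and> int k \<le> \<bar>int (xs!t) - int (xs!(Suc t))\<bar>"
    using assms unfolding k_alternating_def by blast
  show "even t \<Longrightarrow> xs!(Suc t) + k \<le> xs!t" using h by auto
  show "odd t \<Longrightarrow> xs!t + k \<le> xs!(Suc t)" using h by auto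
qed

lemma upper:
  assumes k: "1 \<le> k" and sub: "subseq xs w" and alt: "k_alternating k xs"
  shows "length xs \<le> card {i. i < length w \<and> pkI k w i} + card {i. i < length w \<and> vlI k w i}"
proof -
  define L where "L = length xs"
  obtain f where f1: "\<forall>t<L. f t < length w \<and> xs!t = w!(f t)"
    and f2: "\<forall>s t. s < t \<longrightarrow> t < L \<longrightarrow> f s < f t"
    using subseq_idx[OF sub] unfolding L_def by blast
  have fmono: "f s \<le> f t" if "s \<le> t" "t < L" for s t
  proof (cases "s = t")
    case False
    then have "s < t" using that by simp
    then show ?thesis using f2 that by (simp add: less_imp_le)
  qed simp
  define lo where "lo t = (if t = 0 then 0 else Suc (f (t - 1)))" for t
  define hi where "hi t = (if Suc t = L then length w else f (Suc t))" for t
  have lof: "lo t \<le> f t" if "t < L" for t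
  proof (cases t)
    case (Suc t')
    then have "f t' < f t" using f2 that by simp
    then show ?thesis using Suc unfolding lo_def by simp
  qed (simp add: lo_def)
  have fhi: "f t < hi t" if "t < L" for t
    using that f1 f2 unfolding hi_def by auto
  have hil: "hi t \<le> length w" if "t < L" for t
    using that f1 unfolding hi_def by (auto simp: Suc_lessI less_imp_le)
  have ex: "\<exists>r. t < L \<longrightarrow> lo t \<le> r \<and> r < hi t \<and> (even t \<longrightarrow> pkI k w r) \<and> (odd t \<longrightarrow> vlI k w r)" for t
  proof (cases "t < L")
    case False then show ?thesis by blast
  next
    case True
    have lh: "lo t < hi t" using lof[OF True] fhi[OF True] by simp
    show ?thesis
    proof (cases "even t")
      case ev: True
      obtain r where r: "lo t \<le> r" "r < hi t" "\<forall>l. lo t \<le> l \<and> l < hi t \<longrightarrow> w!l \<le> w!r"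
        using ex_argmax[OF lh, of "\<lambda>i. w!i"] by blast
      have wf: "w!(f t) \<le> w!r" using r(3) lof[OF True] fhi[OF True] by auto
      have "pkI k w r"
      proof (rule win_pk[OF r(1,2) hil[OF True] r(3) _ _ k])
        show "lo t = 0 \<or> w!(lo t - 1) + k \<le> w!r"
        proof (cases t)
          case 0 then show ?thesis unfolding lo_def by simp
        next
          case (Suc t')
          then have "odd t'" using ev by simp
          have "xs!t' + k \<le> xs!(Suc t')" using alt_step(2)[OF alt, of t'] Suc True \<open>odd t'\<close> unfolding L_def by simp
          then show ?thesis using Suc f1 True wf unfolding lo_def by auto
        qed
        show "hi t = length w \<or> w!(hi t) + k \<le> w!r"
        proof (cases "Suc t = L")
          case True then show ?thesis unfolding hi_def by simp
        next
          case False
          then have st: "Suc t < L" using \<open>t < L\<close> by simp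
          have "xs!(Suc t) + k \<le> xs!t" using alt_step(1)[OF alt, of t] st ev unfolding L_def by simp
          then show ?thesis using False f1 st True wf unfolding hi_def by auto
        qed
      qed
      then show ?thesis using r ev by blast
    next
      case od: False
      obtain r where r: "lo t \<le> r" "r < hi t" "\<forall>l. lo t \<le> l \<and> l < hi t \<longrightarrow> w!r \<le> w!l"
        using ex_argmin[OF lh, of "\<lambda>i. w!i"] by blast
      have wf: "w!r \<le> w!(f t)" using r(3) lof[OF True] fhi[OF True] by auto
      obtain t' where t': "t = Suc t'" using od by (cases t) auto
      then have "even t'" using od by simp
      have "xs!(Suc t') + k \<le> xs!t'" using alt_step(1)[OF alt, of t'] t' True \<open>even t'\<close> unfolding L_def by simp
      then have lo1: "w!r + k \<le> w!(lo t - 1)" using t' f1 True wf unfolding lo_def by auto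
      have "vlI k w r"
      proof (rule win_vl[OF r(1,2) hil[OF True] r(3) _ lo1 _ k])
        show "lo t \<noteq> 0" using t' unfolding lo_def by simp
        show "hi t = length w \<or> w!r + k \<le> w!(hi t)"
        proof (cases "Suc t = L")
          case True then show ?thesis unfolding hi_def by simp
        next
          case False
          then have st: "Suc t < L" using \<open>t < L\<close> by simp
          have "xs!t + k \<le> xs!(Suc t)" using alt_step(2)[OF alt, of t] st od unfolding L_def by simp
          then show ?thesis using False f1 st True wf unfolding hi_def by auto
        qed
      qed
      then show ?thesis using r od by blast
    qed
  qed
  then obtain R where R: "\<And>t. t < L \<Longrightarrow> lo t \<le> R t \<and> R t < hi t \<and> (even t \<longrightarrow> pkI k w (R t)) \<and> (odd t \<longrightarrow> vlI k w (R t))"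
    by metis
  have Rlt: "R t < R t'" if "t + 2 \<le> t'" "t' < L" for t t'
  proof -
    have "Suc t \<noteq> L" using that by simp
    then have "hi t = f (Suc t)" unfolding hi_def by simp
    moreover have "lo t' = Suc (f (t' - 1))" using that unfolding lo_def by simp
    moreover have "f (Suc t) \<le> f (t' - 1)" using fmono[of "Suc t" "t' - 1"] that by simp
    moreover have "R t < hi t" "lo t' \<le> R t'" using R[of t] R[of t'] that by auto
    ultimately show ?thesis by simp
  qed
  have injE: "inj_on R {t. t < L \<and> even t}"
  proof (rule inj_onI)
    fix t t' assume a: "t \<in> {t. t < L \<and> even t}" "t' \<in> {t. t < L \<and> even t}" "R t = R t'"
    show "t = t'"
    proof (rule ccontr)
      assume "t \<noteq> t'"
      then have "t + 2 \<le> t' \<or> t' + 2 \<le> t" using a(1,2) by auto presburger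
      then show False using Rlt a by fastforce
    qed
  qed
  have injO: "inj_on R {t. t < L \<and> odd t}"
  proof (rule inj_onI)
    fix t t' assume a: "t \<in> {t. t < L \<and> odd t}" "t' \<in> {t. t < L \<and> odd t}" "R t = R t'"
    show "t = t'"
    proof (rule ccontr)
      assume "t \<noteq> t'"
      then have "t + 2 \<le> t' \<or> t' + 2 \<le> t" using a(1,2) by auto presburger
      then show False using Rlt a by fastforce
    qed
  qed
  have c1: "card {t. t < L \<and> even t} \<le> card {i. i < length w \<and> pkI k w i}"
  proof (rule card_inj_on_le[OF injE])
    show "R ` {t. t < L \<and> even t} \<subseteq> {i. i < length w \<and> pkI k w i}"
      using R hil by (force simp: less_le_trans)
  qed simp
  have c2: "card {t. t < L \<and> odd t} \<le> card {i. i < length w \<and> vlI k w i}"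
  proof (rule card_inj_on_le[OF injO])
    show "R ` {t. t < L \<and> odd t} \<subseteq> {i. i < length w \<and> vlI k w i}"
      using R hil by (force simp: less_le_trans)
  qed simp
  have "L = card ({t. t < L \<and> even t} \<union> {t. t < L \<and> odd t})"
  proof -
    have "{t. t < L \<and> even t} \<union> {t. t < L \<and> odd t} = {..<L}" by auto
    then show ?thesis by simp
  qed
  also have "\<dots> = card {t. t < L \<and> even t} + card {t. t < L \<and> odd t}"
    by (rule card_Un_disjoint) auto
  finally show ?thesis using c1 c2 unfolding L_def by linarith
qed

lemma sorted_idx_less:
  assumes "sorted_wrt (<) (s :: nat list)" "i < length s" "m < length s" "s!i < s!m"
  shows "i < m"
proof (rule ccontr)
  assume "\<not> i < m"
  then have "m = i \<or> m < i" by auto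
  then show False
  proof
    assume "m = i" then show False using assms(4) by simp
  next
    assume "m < i"
    then have "s!m < s!i" using sorted_wrt_nth_less[OF assms(1) _ assms(2)] by simp
    then show False using assms(4) by simp
  qed
qed

lemma lower:
  assumes d: "distinct w" and k: "1 \<le> k" and ne: "w \<noteq> []"
  shows "\<exists>xs. subseq xs w \<and> k_alternating k xs \<and>
     length xs = card {i. i < length w \<and> pkI k w i} + card {i. i < length w \<and> vlI k w i}"
proof -
  define P where "P = {i. i < length w \<and> pkI k w i}"
  define V where "V = {i. i < length w \<and> vlI k w i}"
  define S where "S = P \<union> V"
  have fS: "finite S" unfolding S_def P_def V_def by auto
  have disj: "P \<inter> V = {}" unfolding P_def V_def using pk_not_vl k by blast
  have cS: "card S = card P + card V"
    unfolding S_def by (rule card_Un_disjoint) (use disj in \<open>auto simp: P_def V_def\<close>)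
  define s where "s = sorted_list_of_set S"
  have ss: "sorted_wrt (<) s" unfolding s_def using strict_sorted_list_of_set[of S] by simp
  have sset: "set s = S" unfolding s_def using fS by simp
  have slen: "length s = card S" unfolding s_def by simp
  have sS: "s!j \<in> S" if "j < length s" for j using that sset nth_mem by blast
  have sl: "s!j < length w" if "j < length s" for j using sS[OF that] unfolding S_def P_def V_def by auto
  have inS: "c \<in> S \<longleftrightarrow> c < length w \<and> (pkI k w c \<or> vlI k w c)" for c
    unfolding S_def P_def V_def by auto
  have between: "\<forall>c. s!j < c \<and> c < s!(Suc j) \<longrightarrow> \<not> pkI k w c \<and> \<not> vlI k w c" if "Suc j < length s" for j
  proof (intro allI impI)
    fix c assume c: "s!j < c \<and> c < s!(Suc j)"
    have "c \<notin> S"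
    proof
      assume "c \<in> S"
      then obtain m where m: "m < length s" "s!m = c" using sset by (metis in_set_conv_nth)
      have "j < m" using sorted_idx_less[OF ss _ m(1)] c m that by simp
      moreover have "m < Suc j" using sorted_idx_less[OF ss m(1) that] c m by simp
      ultimately show False by simp
    qed
    moreover have "c < length w" using c sl[OF that] by simp
    ultimately show "\<not> pkI k w c \<and> \<not> vlI k w c" using inS by blast
  qed
  have lt: "s!j < s!(Suc j)" if "Suc j < length s" for j
    using sorted_wrt_nth_less[OF ss _ that] by simp
  have Sne: "S \<noteq> {}" using exists_pk[OF k ne] unfolding S_def P_def by auto
  have s0: "0 < length s" using slen Sne fS by (simp add: card_gt_0_iff)
  have par: "pkI k w (s!j) \<longleftrightarrow> even j" if "j < length s" for j
    using that
  proof (induction j)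
    case 0
    have "pkI k w (s!0)"
    proof (rule first_pk[OF k sl[OF 0]])
      show "pkI k w (s!0) \<or> vlI k w (s!0)" using sS[OF 0] inS by blast
      show "\<forall>c<s!0. \<not> pkI k w c \<and> \<not> vlI k w c"
      proof (intro allI impI)
        fix c assume c: "c < s!0"
        have "c \<notin> S"
        proof
          assume "c \<in> S"
          then obtain m where m: "m < length s" "s!m = c" using sset by (metis in_set_conv_nth)
          have "m < 0" using sorted_idx_less[OF ss m(1) 0] c m by simp
          then show False by simp
        qed
        moreover have "c < length w" using c sl[OF 0] by simp
        ultimately show "\<not> pkI k w c \<and> \<not> vlI k w c" using inS by blast
      qed
    qed
    then show ?case by simp
  next
    case (Suc j)
    have bS: "pkI k w (s!Suc j) \<or> vlI k w (s!Suc j)" using sS[OF Suc.prems] inS by blast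
    have IH: "pkI k w (s!j) \<longleftrightarrow> even j" using Suc by simp
    show ?case
    proof (cases "even j")
      case True
      then have "pkI k w (s!j)" using IH by simp
      then have "vlI k w (s!Suc j)"
        using cons_pk[OF d k lt[OF Suc.prems] sl[OF Suc.prems] between[OF Suc.prems] _ bS] by simp
      then have "\<not> pkI k w (s!Suc j)" using pk_not_vl k by blast
      then show ?thesis using True by simp
    next
      case False
      then have "\<not> pkI k w (s!j)" using IH by simp
      moreover have "pkI k w (s!j) \<or> vlI k w (s!j)" using sS[of j] Suc.prems inS by auto
      ultimately have "vlI k w (s!j)" by simp
      then have "pkI k w (s!Suc j)"
        using cons_vl[OF d k lt[OF Suc.prems] sl[OF Suc.prems] between[OF Suc.prems] _ bS] by simp
      then show ?thesis using False by simp
    qed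
  qed
  define xs where "xs = map (nth w) s"
  have sub: "subseq xs w" unfolding xs_def by (rule subseq_map_nth[OF ss]) (use sl in \<open>auto simp: in_set_conv_nth\<close>)
  have alt: "k_alternating k xs" unfolding k_alternating_def
  proof (intro allI impI)
    fix j assume j: "Suc j < length xs"
    then have js: "Suc j < length s" unfolding xs_def by simp
    have xj: "xs!j = w!(s!j)" "xs!(Suc j) = w!(s!Suc j)" using js unfolding xs_def by auto
    show "(if even j then xs!j > xs!(Suc j) else xs!j < xs!(Suc j)) \<and>
        int k \<le> \<bar>int (xs!j) - int (xs!(Suc j))\<bar>"
    proof (cases "even j")
      case True
      then have "pkI k w (s!j)" using par js by simp
      then have "w!(s!Suc j) + k \<le> w!(s!j)"
        using cons_pk[OF d k lt[OF js] sl[OF js] between[OF js]] sS[OF js] inS by blast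
      then show ?thesis using True xj k by auto
    next
      case False
      then have "\<not> pkI k w (s!j)" using par js by simp
      moreover have "pkI k w (s!j) \<or> vlI k w (s!j)" using sS[of j] js inS by auto
      ultimately have "vlI k w (s!j)" by simp
      then have "w!(s!j) + k \<le> w!(s!Suc j)"
        using cons_vl[OF d k lt[OF js] sl[OF js] between[OF js]] sS[OF js] inS by blast
      then show ?thesis using False xj k by auto
    qed
  qed
  have "length xs = card P + card V" unfolding xs_def using slen cS by simp
  then show ?thesis using sub alt unfolding P_def V_def by blast
qed

lemma as_k_eq:
  assumes d: "distinct w" and k: "1 \<le> k" and ne: "w \<noteq> []"
  shows "as_k k w = card {i. i < length w \<and> pkI k w i} + card {i. i < length w \<and> vlI k w i}"
  unfolding as_k_def
proof (rule Max_eqI)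
  show "finite {length xs |xs. subseq xs w \<and> k_alternating k xs}"
    by (rule finite_subset[of _ "{..length w}"]) (auto dest: list_emb_length)
  show "y \<le> card {i. i < length w \<and> pkI k w i} + card {i. i < length w \<and> vlI k w i}"
    if "y \<in> {length xs |xs. subseq xs w \<and> k_alternating k xs}" for y
    using that upper[OF k] by blast
  show "card {i. i < length w \<and> pkI k w i} + card {i. i < length w \<and> vlI k w i}
      \<in> {length xs |xs. subseq xs w \<and> k_alternating k xs}"
  proof -
    obtain xs where xs: "subseq xs w" "k_alternating k xs"
      "length xs = card {i. i < length w \<and> pkI k w i} + card {i. i < length w \<and> vlI k w i}"
      using lower[OF d k ne] by blast
    show ?thesis using xs by (intro CollectI exI[of _ xs]) simp
  qed
qed

lemma count_pk:
  fixes n k v :: nat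
  assumes k: "1 \<le> k" "k + 1 \<le> n" and v: "v \<in> {1..n}"
  shows "real (card {w\<in>permutations_of_set {1..n}. \<exists>i<length w. w!i = v \<and> pkI k w i})
     = fact n * real ((v - k) * (v - k + 1)) / real ((n - k) * (n - k + 1))"
proof -
  define A where "A = {1..n}"
  define D where "D = {x\<in>A. v < x \<or> x + k \<le> v}"
  define C where "C = insert v D"
  define Q where "Q = nbok True (\<lambda>x. v < x) v None"
  have vA: "v \<in> A" using v unfolding A_def by simp
  have vD: "v \<notin> D" unfolding D_def using k by auto
  have fD: "finite D" unfolding D_def A_def by simp
  have CA: "C \<subseteq> A" unfolding C_def D_def using vA by auto
  have e1: "{w\<in>permutations_of_set A. \<exists>i<length w. w!i = v \<and> pkI k w i}
      = {w\<in>permutations_of_set A. Q (filter (\<lambda>x. x \<in> C) w)}"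
  proof (intro Collect_cong conj_cong refl)
    fix w assume w: "w \<in> permutations_of_set A"
    then have dw: "distinct w" and sw: "set w = A" by (auto dest: permutations_of_setD)
    obtain i where i: "i < length w" "w!i = v" using vA sw by (metis in_set_conv_nth)
    have "(\<exists>i<length w. w!i = v \<and> pkI k w i) \<longleftrightarrow> pkI k w i"
      using i dw nth_eq_iff_index_eq by metis
    also have "\<dots> \<longleftrightarrow> nbok True (\<lambda>x. w!i < x) (w!i) None (filter (\<lambda>x. w!i < x \<or> x + k \<le> w!i \<or> x = w!i) w)"
      by (rule pk_filter[OF dw i(1)])
    also have "filter (\<lambda>x. w!i < x \<or> x + k \<le> w!i \<or> x = w!i) w = filter (\<lambda>x. x \<in> C) w"
      using sw i(2) unfolding C_def D_def by (intro filter_cong) auto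
    finally show "(\<exists>i<length w. w!i = v \<and> pkI k w i) \<longleftrightarrow> Q (filter (\<lambda>x. x \<in> C) w)"
      using i(2) unfolding Q_def by simp
  qed
  have cnt: "card {w\<in>permutations_of_set A. Q (filter (\<lambda>x. x \<in> C) w)} * fact (card C)
      = fact n * card {u\<in>permutations_of_set C. Q u}"
    using filter_count[OF _ CA, of Q] unfolding A_def by simp
  have Dne: "D \<noteq> {}"
  proof (cases "v < n")
    case True then have "n \<in> D" unfolding D_def A_def using k by auto
    then show ?thesis by auto
  next
    case False then have "1 \<in> D" unfolding D_def A_def using k v by auto
    then show ?thesis by auto
  qed
  define g where "g = card {x\<in>D. \<not> v < x}"
  define m where "m = card D"
  have m1: "m \<ge> 1" using Dne fD unfolding m_def by (simp add: Suc_leI card_gt_0_iff)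
  have tot: "card {u\<in>permutations_of_set C. Q u} = g^2 * fact (m - 1) + g * fact (m - 1)"
    unfolding C_def Q_def g_def m_def by (rule PK_total[OF fD vD Dne])
  have cC: "card C = m + 1" unfolding C_def m_def using fD vD by simp
  have gv: "g = v - k"
  proof -
    have "{x\<in>D. \<not> v < x} = {1..v - k}" unfolding D_def A_def using v by auto
    then show ?thesis unfolding g_def by simp
  qed
  have mN: "m = n - k" if "g \<ge> 1"
  proof -
    have vk: "k + 1 \<le> v" using that gv by simp
    have "D = {v+1..n} \<union> {1..v - k}" unfolding D_def A_def using v vk by auto
    moreover have "card ({v+1..n} \<union> {1..v - k}) = card {v+1..n} + card {1..v - k}"
      by (rule card_Un_disjoint) auto
    ultimately have "m = (n - v) + (v - k)" unfolding m_def by simp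
    then show ?thesis using vk v by simp
  qed
  have main: "real (card {w\<in>permutations_of_set A. Q (filter (\<lambda>x. x \<in> C) w)}) * fact (m + 1)
      = fact n * (real g ^ 2 + real g) * fact (m - 1)"
  proof -
    have "real (card {w\<in>permutations_of_set A. Q (filter (\<lambda>x. x \<in> C) w)} * fact (card C))
       = real (fact n * (g^2 * fact (m - 1) + g * fact (m - 1)))" using cnt tot by simp
    then show ?thesis unfolding cC by (simp add: algebra_simps of_nat_fact)
  qed
  have fm: "(fact (m + 1) :: real) = real (m + 1) * real m * fact (m - 1)"
  proof -
    have "m + 1 = Suc (Suc (m - 1))" using m1 by simp
    then have "(fact (m + 1) :: real) = fact (Suc (Suc (m - 1)))" by simp
    also have "\<dots> = real (Suc (Suc (m - 1))) * (real (Suc (m - 1)) * fact (m - 1))" by simp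
    also have "Suc (m - 1) = m" using m1 by simp
    finally show ?thesis using m1 by simp
  qed
  have pos: "(fact (m - 1) :: real) > 0" by simp
  have res: "real (card {w\<in>permutations_of_set A. Q (filter (\<lambda>x. x \<in> C) w)})
      = fact n * (real g * (real g + 1)) / (real m * (real m + 1))"
  proof -
    have mp: "real m > 0" using m1 by simp
    have "real (card {w\<in>permutations_of_set A. Q (filter (\<lambda>x. x \<in> C) w)}) * (real (m + 1) * real m) * fact (m - 1)
        = fact n * (real g ^ 2 + real g) * fact (m - 1)" using main fm by (simp add: mult.assoc)
    then have "real (card {w\<in>permutations_of_set A. Q (filter (\<lambda>x. x \<in> C) w)}) * (real (m + 1) * real m)
        = fact n * (real g ^ 2 + real g)" using pos by (simp add: mult.assoc)
    then have "real (card {w\<in>permutations_of_set A. Q (filter (\<lambda>x. x \<in> C) w)}) * (real m * (real m + 1))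
        = fact n * (real g * (real g + 1))" by (simp add: algebra_simps power2_eq_square)
    moreover have nz: "real m * (real m + 1) \<noteq> 0" using mp by simp
    ultimately show ?thesis by (simp add: eq_divide_eq)
  qed
  have ce: "card {w\<in>permutations_of_set {1..n}. \<exists>i<length w. w!i = v \<and> pkI k w i}
     = card {w\<in>permutations_of_set A. Q (filter (\<lambda>x. x \<in> C) w)}" using e1 unfolding A_def by simp
  have g1: "real ((v - k) * (v - k + 1)) = real g * (real g + 1)" unfolding gv[symmetric] by (simp add: algebra_simps)
  show ?thesis
  proof (cases "g \<ge> 1")
    case True
    have "real ((n - k) * (n - k + 1)) = real m * (real m + 1)" unfolding mN[OF True, symmetric] by (simp add: algebra_simps)
    then show ?thesis using res by (simp only: ce g1)
  next
    case False
    then have "g = 0" by simp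
    then show ?thesis using res gv ce by simp
  qed
qed

lemma count_vl:
  fixes n k v :: nat
  assumes k: "1 \<le> k" "k + 1 \<le> n" and v: "v \<in> {1..n}"
  shows "real (card {w\<in>permutations_of_set {1..n}. \<exists>i<length w. w!i = v \<and> vlI k w i})
     = fact n * real ((n + 1 - (v + k))^2) / real ((n - k) * (n - k + 1))"
proof -
  define A where "A = {1..n}"
  define D where "D = {x\<in>A. x < v \<or> v + k \<le> x}"
  define C where "C = insert v D"
  define Q where "Q = nbok False (\<lambda>x. x < v) v None"
  have vA: "v \<in> A" using v unfolding A_def by simp
  have vD: "v \<notin> D" unfolding D_def using k by auto
  have fD: "finite D" unfolding D_def A_def by simp
  have CA: "C \<subseteq> A" unfolding C_def D_def using vA by auto
  have e1: "{w\<in>permutations_of_set A. \<exists>i<length w. w!i = v \<and> vlI k w i}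
      = {w\<in>permutations_of_set A. Q (filter (\<lambda>x. x \<in> C) w)}"
  proof (intro Collect_cong conj_cong refl)
    fix w assume w: "w \<in> permutations_of_set A"
    then have dw: "distinct w" and sw: "set w = A" by (auto dest: permutations_of_setD)
    obtain i where i: "i < length w" "w!i = v" using vA sw by (metis in_set_conv_nth)
    have "(\<exists>i<length w. w!i = v \<and> vlI k w i) \<longleftrightarrow> vlI k w i"
      using i dw nth_eq_iff_index_eq by metis
    also have "\<dots> \<longleftrightarrow> nbok False (\<lambda>x. x < w!i) (w!i) None (filter (\<lambda>x. x < w!i \<or> w!i + k \<le> x \<or> x = w!i) w)"
      by (rule vl_filter[OF dw i(1)])
    also have "filter (\<lambda>x. x < w!i \<or> w!i + k \<le> x \<or> x = w!i) w = filter (\<lambda>x. x \<in> C) w"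
      using sw i(2) unfolding C_def D_def by (intro filter_cong) auto
    finally show "(\<exists>i<length w. w!i = v \<and> vlI k w i) \<longleftrightarrow> Q (filter (\<lambda>x. x \<in> C) w)"
      using i(2) unfolding Q_def by simp
  qed
  have cnt: "card {w\<in>permutations_of_set A. Q (filter (\<lambda>x. x \<in> C) w)} * fact (card C)
      = fact n * card {u\<in>permutations_of_set C. Q u}"
    using filter_count[OF _ CA, of Q] unfolding A_def by simp
  have Dne: "D \<noteq> {}"
  proof (cases "1 < v")
    case True then have "1 \<in> D" unfolding D_def A_def using v by auto
    then show ?thesis by auto
  next
    case False then have "n \<in> D" unfolding D_def A_def using k v by auto
    then show ?thesis by auto
  qed
  define g where "g = card {x\<in>D. \<not> x < v}"
  define m where "m = card D"
  have m1: "m \<ge> 1" using Dne fD unfolding m_def by (simp add: Suc_leI card_gt_0_iff)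
  have tot: "card {u\<in>permutations_of_set C. Q u} = g^2 * fact (m - 1)"
    unfolding C_def Q_def g_def m_def by (rule VL_total[OF fD vD])
  have cC: "card C = m + 1" unfolding C_def m_def using fD vD by simp
  have gv: "g = n + 1 - (v + k)"
  proof -
    have "{x\<in>D. \<not> x < v} = {v + k..n}" unfolding D_def A_def using v k by auto
    then show ?thesis unfolding g_def by simp
  qed
  have mN: "m = n - k" if "g \<ge> 1"
  proof -
    have vk: "v + k \<le> n" using that gv by simp
    have "D = {1..v - 1} \<union> {v + k..n}" unfolding D_def A_def using v vk by auto
    moreover have "card ({1..v - 1} \<union> {v + k..n}) = card {1..v - 1} + card {v + k..n}"
      by (rule card_Un_disjoint) auto
    ultimately have "m = (v - 1) + (n + 1 - (v + k))" unfolding m_def by simp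
    then show ?thesis using vk v by simp
  qed
  have main: "real (card {w\<in>permutations_of_set A. Q (filter (\<lambda>x. x \<in> C) w)}) * fact (m + 1)
      = fact n * (real g ^ 2) * fact (m - 1)"
  proof -
    have "real (card {w\<in>permutations_of_set A. Q (filter (\<lambda>x. x \<in> C) w)} * fact (card C))
       = real (fact n * (g^2 * fact (m - 1)))" using cnt tot by simp
    then show ?thesis unfolding cC by (simp add: algebra_simps of_nat_fact)
  qed
  have fm: "(fact (m + 1) :: real) = real (m + 1) * real m * fact (m - 1)"
  proof -
    have "m + 1 = Suc (Suc (m - 1))" using m1 by simp
    then have "(fact (m + 1) :: real) = fact (Suc (Suc (m - 1)))" by simp
    also have "\<dots> = real (Suc (Suc (m - 1))) * (real (Suc (m - 1)) * fact (m - 1))" by simp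
    also have "Suc (m - 1) = m" using m1 by simp
    finally show ?thesis using m1 by simp
  qed
  have pos: "(fact (m - 1) :: real) > 0" by simp
  have res: "real (card {w\<in>permutations_of_set A. Q (filter (\<lambda>x. x \<in> C) w)})
      = fact n * (real g * real g) / (real m * (real m + 1))"
  proof -
    have mp: "real m > 0" using m1 by simp
    have "real (card {w\<in>permutations_of_set A. Q (filter (\<lambda>x. x \<in> C) w)}) * (real (m + 1) * real m) * fact (m - 1)
        = fact n * (real g ^ 2) * fact (m - 1)" using main fm by (simp add: mult.assoc)
    then have "real (card {w\<in>permutations_of_set A. Q (filter (\<lambda>x. x \<in> C) w)}) * (real (m + 1) * real m)
        = fact n * (real g ^ 2)" using pos by (simp add: mult.assoc)
    then have "real (card {w\<in>permutations_of_set A. Q (filter (\<lambda>x. x \<in> C) w)}) * (real m * (real m + 1))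
        = fact n * (real g * real g)" by (simp add: algebra_simps power2_eq_square)
    moreover have nz: "real m * (real m + 1) \<noteq> 0" using mp by simp
    ultimately show ?thesis by (simp add: eq_divide_eq)
  qed
  have ce: "card {w\<in>permutations_of_set {1..n}. \<exists>i<length w. w!i = v \<and> vlI k w i}
     = card {w\<in>permutations_of_set A. Q (filter (\<lambda>x. x \<in> C) w)}" using e1 unfolding A_def by simp
  have g1: "real ((n + 1 - (v + k))^2) = real g * real g" unfolding gv[symmetric] by (simp add: power2_eq_square)
  show ?thesis
  proof (cases "g \<ge> 1")
    case True
    have "real ((n - k) * (n - k + 1)) = real m * (real m + 1)" unfolding mN[OF True, symmetric] by (simp add: algebra_simps)
    then show ?thesis using res by (simp only: ce g1)
  next
    case False
    then have "g = 0" by simp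
    then show ?thesis using res g1 ce by simp
  qed
qed

lemma idx_to_val:
  assumes "distinct w"
  shows "card {i. i < length w \<and> Q i} = card {v\<in>set w. \<exists>i<length w. w!i = v \<and> Q i}"
proof -
  have "{v\<in>set w. \<exists>i<length w. w!i = v \<and> Q i} = (nth w) ` {i. i < length w \<and> Q i}"
  proof (intro equalityI subsetI)
    fix v assume "v \<in> {v\<in>set w. \<exists>i<length w. w!i = v \<and> Q i}"
    then obtain i where "i < length w" "w!i = v" "Q i" by blast
    then show "v \<in> (nth w) ` {i. i < length w \<and> Q i}" by (intro image_eqI[of _ _ i]) auto
  next
    fix v assume "v \<in> (nth w) ` {i. i < length w \<and> Q i}"
    then obtain i where "i < length w" "w!i = v" "Q i" by blast
    then show "v \<in> {v\<in>set w. \<exists>i<length w. w!i = v \<and> Q i}" using nth_mem by blast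
  qed
  moreover have "inj_on (nth w) {i. i < length w \<and> Q i}" by (rule inj_on_nth) (use assms in auto)
  ultimately show ?thesis by (simp add: card_image)
qed

lemma card_filter_sum:
  assumes "finite A"
  shows "card {v\<in>A. P v} = (\<Sum>v\<in>A. if P v then 1 else (0::nat))"
proof -
  have "(\<Sum>v\<in>A. if P v then 1 else (0::nat)) = sum (\<lambda>_. 1::nat) {v\<in>A. P v}"
    by (rule sum.inter_filter[symmetric]) fact
  also have "\<dots> = card {v\<in>A. P v}" by simp
  finally show ?thesis ..
qed

lemma sum_card_swap:
  assumes "finite A" "finite W"
  shows "(\<Sum>w\<in>W. card {v\<in>A. R w v}) = (\<Sum>v\<in>A. card {w\<in>W. R w v})"
proof -
  have "(\<Sum>w\<in>W. card {v\<in>A. R w v}) = (\<Sum>w\<in>W. \<Sum>v\<in>A. if R w v then 1 else 0)"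
    using assms by (intro sum.cong refl card_filter_sum) 
  also have "\<dots> = (\<Sum>v\<in>A. \<Sum>w\<in>W. if R w v then 1 else 0)" by (rule sum.swap)
  also have "\<dots> = (\<Sum>v\<in>A. card {w\<in>W. R w v})"
    using assms by (intro sum.cong refl card_filter_sum[symmetric])
  finally show ?thesis .
qed

lemma S1: "3 * (\<Sum>v=1..n. (v - k) * (v - k + 1)) = (n - k) * (n - k + 1) * (n - k + (2::nat))"
proof (induction n)
  case 0 then show ?case by simp
next
  case (Suc n)
  have "(\<Sum>v=1..Suc n. (v - k) * (v - k + 1)) = (\<Sum>v=1..n. (v - k) * (v - k + 1)) + (Suc n - k) * (Suc n - k + 1)"
    by simp
  show ?case
  proof (cases "n < k")
    case True
    then have "Suc n - k = 0" "n - k = 0" by auto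
    then show ?thesis using Suc \<open>(\<Sum>v=1..Suc n. (v - k) * (v - k + 1)) = _\<close> by simp
  next
    case False
    then have e: "Suc n - k = Suc (n - k)" by simp
    define N where "N = n - k"
    define S where "S = (\<Sum>v=1..n. (v - k) * (v - k + 1))"
    have IH: "3 * S = N * (N + 1) * (N + 2)" using Suc.IH unfolding S_def N_def .
    have "3 * (S + Suc N * (Suc N + 1)) = Suc N * (Suc N + 1) * (Suc N + 2)"
      using IH by (simp add: algebra_simps)
    moreover have "(\<Sum>v=1..Suc n. (v - k) * (v - k + 1)) = S + Suc N * (Suc N + 1)"
      using \<open>(\<Sum>v=1..Suc n. (v - k) * (v - k + 1)) = _\<close> e unfolding S_def N_def by simp
    ultimately show ?thesis unfolding e N_def[symmetric] by simp
  qed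
qed

lemma S2: "6 * (\<Sum>v=1..n. (v - k)^2) = (n - k) * (n - k + 1) * (2 * (n - k) + (1::nat))"
proof (induction n)
  case 0 then show ?case by simp
next
  case (Suc n)
  have "(\<Sum>v=1..Suc n. (v - k)^2) = (\<Sum>v=1..n. (v - k)^2) + (Suc n - k)^2"
    by simp
  show ?case
  proof (cases "n < k")
    case True
    then have "Suc n - k = 0" "n - k = 0" by auto
    then show ?thesis using Suc \<open>(\<Sum>v=1..Suc n. (v - k)^2) = _\<close> by simp
  next
    case False
    then have e: "Suc n - k = Suc (n - k)" by simp
    define N where "N = n - k"
    define S where "S = (\<Sum>v=1..n. (v - k)^2)"
    have IH: "6 * S = N * (N + 1) * (2 * N + 1)" using Suc.IH unfolding S_def N_def .
    have "6 * (S + (Suc N)^2) = Suc N * (Suc N + 1) * (2 * Suc N + 1)"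
      using IH by (simp add: algebra_simps power2_eq_square)
    moreover have "(\<Sum>v=1..Suc n. (v - k)^2) = S + (Suc N)^2"
      using \<open>(\<Sum>v=1..Suc n. (v - k)^2) = _\<close> e unfolding S_def N_def by simp
    ultimately show ?thesis unfolding e N_def[symmetric] by simp
  qed
qed

lemma S2_reindex: "(\<Sum>v=1..n. (n + 1 - (v + k))^2) = (\<Sum>u=1..(n::nat). (u - k)^2)"
proof (rule sum.reindex_bij_witness[of _ "\<lambda>x. n + 1 - x" "\<lambda>x. n + 1 - x"])
  fix a assume "a \<in> {1..n}"
  then show "n + 1 - (n + 1 - a) = a" "n + 1 - a \<in> {1..n}" "(n + 1 - a - k)^2 = (n + 1 - (a + k))^2" by auto
qed auto


theorem theorem1p1:
  fixes n k :: nat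
  assumes "1 \<le> k" and "k + 1 \<le> n"
  shows "(\<Sum>w\<in>permutations_of_set {1..n}. real (as_k k w)) / fact n
           = (4 * (real n - real k) + 5) / 6"
proof -
  define A where "A = {1..n}"
  define W where "W = permutations_of_set A"
  define N where "N = n - k"
  define pkV where "pkV w v = (\<exists>i<length w. w!i = v \<and> pkI k w i)" for w v
  define vlV where "vlV w v = (\<exists>i<length w. w!i = v \<and> vlI k w i)" for w v
  have fA: "finite A" and fW: "finite W" unfolding A_def W_def by auto
  have N1: "N \<ge> 1" unfolding N_def using assms by simp
  have asw: "as_k k w = card {v\<in>A. pkV w v} + card {v\<in>A. vlV w v}" if "w \<in> W" for w
  proof -
    have dw: "distinct w" and sw: "set w = A" using that unfolding W_def by (auto dest: permutations_of_setD)
    have "w \<noteq> []" using sw assms unfolding A_def by auto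
    then show ?thesis using as_k_eq[OF dw assms(1)] idx_to_val[OF dw] sw unfolding pkV_def vlV_def by simp
  qed
  have "(\<Sum>w\<in>W. as_k k w) = (\<Sum>w\<in>W. card {v\<in>A. pkV w v}) + (\<Sum>w\<in>W. card {v\<in>A. vlV w v})"
    by (simp add: asw sum.distrib)
  also have "\<dots> = (\<Sum>v\<in>A. card {w\<in>W. pkV w v}) + (\<Sum>v\<in>A. card {w\<in>W. vlV w v})"
    using sum_card_swap[OF fA fW] by simp
  finally have tot: "(\<Sum>w\<in>W. as_k k w) = (\<Sum>v\<in>A. card {w\<in>W. pkV w v}) + (\<Sum>v\<in>A. card {w\<in>W. vlV w v})" .
  define D where "D = real (N * (N + 1))"
  have Dpos: "D > 0" unfolding D_def of_nat_0_less_iff using N1 by simp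
  have sp: "(\<Sum>v\<in>A. real (card {w\<in>W. pkV w v})) = (\<Sum>v\<in>A. fact n * real ((v - k) * (v - k + 1)) / D)"
    by (intro sum.cong refl) (use count_pk[OF assms] in \<open>simp add: A_def W_def pkV_def D_def N_def\<close>)
  have sv: "(\<Sum>v\<in>A. real (card {w\<in>W. vlV w v})) = (\<Sum>v\<in>A. fact n * real ((n + 1 - (v + k))^2) / D)"
    by (intro sum.cong refl) (use count_vl[OF assms] in \<open>simp add: A_def W_def vlV_def D_def N_def\<close>)
  have s1: "real (\<Sum>v\<in>A. (v - k) * (v - k + 1)) = real N * (real N + 1) * (real N + 2) / 3"
  proof -
    have e: "3 * (\<Sum>v\<in>A. (v - k) * (v - k + 1)) = N * (N + 1) * (N + 2)"
      using S1[where n=n and k=k] unfolding A_def N_def .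
    have "real (3 * (\<Sum>v\<in>A. (v - k) * (v - k + 1))) = real (N * (N + 1) * (N + 2))" using e by (simp only:)
    then have "3 * real (\<Sum>v\<in>A. (v - k) * (v - k + 1)) = real N * (real N + 1) * (real N + 2)"
      by (simp only: of_nat_mult of_nat_add of_nat_numeral of_nat_1)
    then show ?thesis by linarith
  qed
  have s2: "real (\<Sum>v\<in>A. (n + 1 - (v + k))^2) = real N * (real N + 1) * (2 * real N + 1) / 6"
  proof -
    have e: "6 * (\<Sum>v\<in>A. (n + 1 - (v + k))^2) = N * (N + 1) * (2 * N + 1)"
      using S2[where n=n and k=k] S2_reindex[where n=n and k=k] unfolding A_def N_def by simp
    have "real (6 * (\<Sum>v\<in>A. (n + 1 - (v + k))^2)) = real (N * (N + 1) * (2 * N + 1))" using e by (simp only:)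
    then have "6 * real (\<Sum>v\<in>A. (n + 1 - (v + k))^2) = real N * (real N + 1) * (2 * real N + 1)"
      by (simp only: of_nat_mult of_nat_add of_nat_numeral of_nat_1)
    then show ?thesis by linarith
  qed
  have "(\<Sum>w\<in>W. real (as_k k w)) = real (\<Sum>w\<in>W. as_k k w)" by simp
  also have "\<dots> = (\<Sum>v\<in>A. real (card {w\<in>W. pkV w v})) + (\<Sum>v\<in>A. real (card {w\<in>W. vlV w v}))"
    unfolding tot by simp
  also have "\<dots> = fact n / D * (real (\<Sum>v\<in>A. (v - k) * (v - k + 1)) + real (\<Sum>v\<in>A. (n + 1 - (v + k))^2))"
    unfolding sp sv by (simp add: sum_divide_distrib[symmetric] sum_distrib_left[symmetric] distrib_left
        del: of_nat_mult of_nat_add of_nat_power)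
  also have "\<dots> = fact n / D * (real N * (real N + 1) * (real N + 2) / 3 + real N * (real N + 1) * (2 * real N + 1) / 6)"
    unfolding s1 s2 ..
  also have "\<dots> = fact n * ((4 * real N + 5) / 6)"
    using Dpos unfolding D_def by (simp add: field_simps)
  finally have "(\<Sum>w\<in>W. real (as_k k w)) = fact n * ((4 * real N + 5) / 6)" .
  moreover have "real N = real n - real k" unfolding N_def using assms by simp
  ultimately show ?thesis unfolding W_def A_def by simp
qed

end
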